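(* Let $G$ be a finite group and $S\le H$ subgroups of $G$ with $S\trianglelefteq G$. Let $\theta\in\mathrm{Irr}(H)$ lie above $\lambda\in\mathrm{Irr}(S)$, and let $\theta_\lambda\in\mathrm{Irr}(H(\lambda))$ be the $\lambda$-Clifford correspondent of $\theta$. If $\theta$ extends to its stabilizer $G(\theta)$ in $G$, then $\theta_\lambda$ extends to $G(\theta,\lambda)$.
   Context: $K(\phi)$ (resp. $K(\phi_1,\phi_2)$) is the stabilizer in $K$ of $\phi$ (resp. of both $\phi_1$ and $\phi_2$). The $\lambda$-Clifford correspondent $\theta_\lambda$ is the unique irreducible character of $H(\lambda)$ lying above $\lambda$ and inducing $\theta$. *)

theory Defs
  imports "HOL-Algebra.Algebra" "Jordan_Normal_Form.Matrix"
begin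

text \<open>Complex characters of subgroups of a finite group G (HOL-Algebra).
  Class functions on a subgroup H are functions on the element type that vanish
  outside H.\<close>

definition mat_trace :: "complex mat \<Rightarrow> complex" where
  "mat_trace A = (\<Sum>i<dim_row A. A $$ (i, i))"

definition is_rep :: "('a, 'b) monoid_scheme \<Rightarrow> 'a set \<Rightarrow> nat \<Rightarrow> ('a \<Rightarrow> complex mat) \<Rightarrow> bool" where
  "is_rep G H n \<rho> \<longleftrightarrow>
     (\<forall>g\<in>H. \<rho> g \<in> carrier_mat n n) \<and> \<rho> \<one>\<^bsub>G\<^esub> = 1\<^sub>m n \<and>
     (\<forall>g\<in>H. \<forall>h\<in>H. \<rho> (g \<otimes>\<^bsub>G\<^esub> h) = \<rho> g * \<rho> h)"

definition is_subspace :: "nat \<Rightarrow> complex vec set \<Rightarrow> bool" where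
  "is_subspace n W \<longleftrightarrow> W \<subseteq> carrier_vec n \<and> 0\<^sub>v n \<in> W \<and>
     (\<forall>v\<in>W. \<forall>w\<in>W. v + w \<in> W) \<and> (\<forall>c. \<forall>v\<in>W. c \<cdot>\<^sub>v v \<in> W)"

definition irr_rep :: "('a, 'b) monoid_scheme \<Rightarrow> 'a set \<Rightarrow> nat \<Rightarrow> ('a \<Rightarrow> complex mat) \<Rightarrow> bool" where
  "irr_rep G H n \<rho> \<longleftrightarrow> is_rep G H n \<rho> \<and> n > 0 \<and>
     (\<forall>W. is_subspace n W \<and> (\<forall>g\<in>H. \<forall>w\<in>W. \<rho> g *\<^sub>v w \<in> W)
          \<longrightarrow> W = {0\<^sub>v n} \<or> W = carrier_vec n)"

definition char_of :: "'a set \<Rightarrow> ('a \<Rightarrow> complex mat) \<Rightarrow> 'a \<Rightarrow> complex" where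
  "char_of H \<rho> = (\<lambda>g. if g \<in> H then mat_trace (\<rho> g) else 0)"

definition is_character :: "('a, 'b) monoid_scheme \<Rightarrow> 'a set \<Rightarrow> ('a \<Rightarrow> complex) \<Rightarrow> bool" where
  "is_character G H \<chi> \<longleftrightarrow> (\<exists>n \<rho>. is_rep G H n \<rho> \<and> \<chi> = char_of H \<rho>)"

definition Irr :: "('a, 'b) monoid_scheme \<Rightarrow> 'a set \<Rightarrow> ('a \<Rightarrow> complex) set" where
  "Irr G H = {\<chi>. \<exists>n \<rho>. irr_rep G H n \<rho> \<and> \<chi> = char_of H \<rho>}"

definition res :: "'a set \<Rightarrow> ('a \<Rightarrow> complex) \<Rightarrow> 'a \<Rightarrow> complex" where
  "res K \<chi> = (\<lambda>g. if g \<in> K then \<chi> g else 0)"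

definition ind :: "('a, 'b) monoid_scheme \<Rightarrow> 'a set \<Rightarrow> 'a set \<Rightarrow> ('a \<Rightarrow> complex) \<Rightarrow> 'a \<Rightarrow> complex" where
  "ind G K H \<psi> = (\<lambda>g. if g \<in> H then
      (\<Sum>x\<in>H. res K \<psi> (x \<otimes>\<^bsub>G\<^esub> g \<otimes>\<^bsub>G\<^esub> inv\<^bsub>G\<^esub> x)) / of_nat (card K) else 0)"

definition inner_char :: "'a set \<Rightarrow> ('a \<Rightarrow> complex) \<Rightarrow> ('a \<Rightarrow> complex) \<Rightarrow> complex" where
  "inner_char K \<chi> \<psi> = (\<Sum>g\<in>K. \<chi> g * cnj (\<psi> g)) / of_nat (card K)"

definition lies_above :: "'a set \<Rightarrow> ('a \<Rightarrow> complex) \<Rightarrow> ('a \<Rightarrow> complex) \<Rightarrow> bool" where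
  "lies_above S \<theta> lam \<longleftrightarrow> inner_char S (res S \<theta>) lam \<noteq> 0"

definition stab :: "('a, 'b) monoid_scheme \<Rightarrow> 'a set \<Rightarrow> 'a set \<Rightarrow> ('a \<Rightarrow> complex) \<Rightarrow> 'a set" where
  "stab G K H \<phi> = {g \<in> K. (\<lambda>h. inv\<^bsub>G\<^esub> g \<otimes>\<^bsub>G\<^esub> h \<otimes>\<^bsub>G\<^esub> g) ` H = H \<and>
      (\<forall>h\<in>H. \<phi> (g \<otimes>\<^bsub>G\<^esub> h \<otimes>\<^bsub>G\<^esub> inv\<^bsub>G\<^esub> g) = \<phi> h)}"

definition extends_to :: "('a, 'b) monoid_scheme \<Rightarrow> 'a set \<Rightarrow> 'a set \<Rightarrow> ('a \<Rightarrow> complex) \<Rightarrow> bool" where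
  "extends_to G K H \<theta> \<longleftrightarrow> (\<exists>\<chi>. is_character G K \<chi> \<and> res H \<chi> = \<theta>)"

end

theory Submission
  imports Defs "Jordan_Normal_Form.Schur_Decomposition"
begin

lemma mult_entry:
  assumes "A \<in> carrier_mat n k" "B \<in> carrier_mat k m" "i < n" "j < m"
  shows "(A * B) $$ (i,j) = (\<Sum>l<k. A $$ (i,l) * B $$ (l,j))"
  using assms by (auto simp: scalar_prod_def atLeast0LessThan)

lemma mat_trace_comm:
  assumes "A \<in> carrier_mat n m" "B \<in> carrier_mat m n"
  shows "mat_trace (A * B) = mat_trace (B * A)"
proof -
  have "mat_trace (A * B) = (\<Sum>i<n. \<Sum>l<m. A $$ (i,l) * B $$ (l,i))"
    unfolding mat_trace_def using assms by (auto intro!: sum.cong simp del: index_mult_mat(1) simp: mult_entry[OF assms])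
  also have "\<dots> = (\<Sum>l<m. \<Sum>i<n. B $$ (l,i) * A $$ (i,l))"
    by (subst sum.swap) (simp add: mult.commute)
  also have "\<dots> = mat_trace (B * A)"
    unfolding mat_trace_def using assms by (auto intro!: sum.cong simp del: index_mult_mat(1) simp: mult_entry[OF assms(2,1)])
  finally show ?thesis .
qed

lemma sum_single:
  assumes "finite A" "j \<in> A" "\<And>l. l \<in> A \<Longrightarrow> l \<noteq> j \<Longrightarrow> f l = 0"
  shows "sum f A = f j"
proof -
  have "sum f A = sum f {j}" using assms by (intro sum.mono_neutral_right) auto
  then show ?thesis by simp
qed

lemma sum_two:
  assumes "finite A" "i \<in> A" "j \<in> A" "i \<noteq> j" "\<And>l. l \<in> A \<Longrightarrow> l \<noteq> i \<Longrightarrow> l \<noteq> j \<Longrightarrow> f l = 0"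
  shows "sum f A = f i + f j"
proof -
  have "sum f A = sum f {i,j}" using assms by (intro sum.mono_neutral_right) auto
  then show ?thesis using assms by simp
qed

lemma prod_list_filter_split:
  "prod_list (map f (filter P xs)) * prod_list (map f (filter (\<lambda>x. \<not> P x) xs)) = prod_list (map (f :: 'a \<Rightarrow> 'b :: comm_monoid_mult) xs)"
  by (induct xs) (auto simp: ac_simps)

lemma ut_idem:
  fixes U :: "complex mat"
  assumes U: "U \<in> carrier_mat d d" and ut: "upper_triangular U" and idem: "U * U = U"
    and d1: "\<And>i. i < r \<Longrightarrow> U $$ (i,i) = 1" and dn: "\<And>i. r \<le> i \<Longrightarrow> i < d \<Longrightarrow> U $$ (i,i) \<noteq> 1"
    and rd: "r \<le> d"
  shows "\<And>i. r \<le> i \<Longrightarrow> i < d \<Longrightarrow> U $$ (i,i) = 0"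
    and "\<And>i j. i < j \<Longrightarrow> j < d \<Longrightarrow> (i < r \<longleftrightarrow> j < r) \<Longrightarrow> U $$ (i,j) = 0"
proof -
  have low: "\<And>i l. i < d \<Longrightarrow> l < i \<Longrightarrow> U $$ (i,l) = 0" using ut U unfolding upper_triangular_def by auto
  have sq: "U $$ (i,j) = (\<Sum>l<d. U $$ (i,l) * U $$ (l,j))" if "i < d" "j < d" for i j
  proof -
    have "U $$ (i,j) = (U * U) $$ (i,j)" using idem by simp
    also have "\<dots> = (\<Sum>l<d. U $$ (i,l) * U $$ (l,j))" using U that by (rule_tac mult_entry) auto
    finally show ?thesis .
  qed
  show diag0: "U $$ (i,i) = 0" if "r \<le> i" "i < d" for i
  proof -
    have "U $$ (i,i) = (\<Sum>l<d. U $$ (i,l) * U $$ (l,i))" using that by (intro sq) auto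
    also have "\<dots> = U $$ (i,i) * U $$ (i,i)"
    proof (rule sum_single)
      fix l assume l: "l \<in> {..<d}" "l \<noteq> i"
      show "U $$ (i,l) * U $$ (l,i) = 0"
      proof (cases "l < i")
        case True then show ?thesis using low[of i l] that by simp
      next
        case False then have "i < l" using l by simp
        then show ?thesis using low[of l i] l by simp
      qed
    qed (use that in auto)
    finally have c: "U $$ (i,i) = U $$ (i,i) * U $$ (i,i)" .
    have "U $$ (i,i) * (U $$ (i,i) - 1) = U $$ (i,i) * U $$ (i,i) - U $$ (i,i)" by (simp add: algebra_simps)
    also have "\<dots> = 0" by (simp only: c[symmetric]) simp
    finally have "U $$ (i,i) * (U $$ (i,i) - 1) = 0" .
    then show ?thesis using dn[OF that] by auto
  qed
  have main: "\<forall>i j. i < j \<and> j < d \<and> j - i = k \<and> (i < r \<longleftrightarrow> j < r) \<longrightarrow> U $$ (i,j) = 0" for k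
  proof (induction k rule: less_induct)
    case (less k)
    show ?case
    proof (intro allI impI)
      fix i j assume h: "i < j \<and> j < d \<and> j - i = k \<and> (i < r \<longleftrightarrow> j < r)"
      have "U $$ (i,j) = (\<Sum>l<d. U $$ (i,l) * U $$ (l,j))" using h by (intro sq) auto
      also have "\<dots> = U $$ (i,i) * U $$ (i,j) + U $$ (i,j) * U $$ (j,j)"
      proof (rule sum_two)
        fix l assume l: "l \<in> {..<d}" "l \<noteq> i" "l \<noteq> j"
        show "U $$ (i,l) * U $$ (l,j) = 0"
        proof (cases "l < i")
          case True then show ?thesis using low[of i l] h by simp
        next
          case False
          show ?thesis
          proof (cases "l < j")
            case True
            have il: "i < l" using False l(2) by simp
            have lk: "l - i < k" using il True h by linarith
            have blk: "(i < r \<longleftrightarrow> l < r)" using il True h by linarith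
            have "U $$ (i,l) = 0"
              by (rule less.IH[OF lk, rule_format, of i l]) (use il True h blk in auto)
            then show ?thesis by simp
          next
            case False
            then have "j < l" using l(3) by simp
            then show ?thesis using low[of l j] l by simp
          qed
        qed
      next
        show "finite {..<d}" by simp
        show "i \<in> {..<d}" using h by simp
        show "j \<in> {..<d}" using h by simp
        show "i \<noteq> j" using h by simp
      qed
      finally have c: "U $$ (i,j) = U $$ (i,i) * U $$ (i,j) + U $$ (i,j) * U $$ (j,j)" .
      have "U $$ (i,j) * (U $$ (i,i) + U $$ (j,j) - 1) = (U $$ (i,i) * U $$ (i,j) + U $$ (i,j) * U $$ (j,j)) - U $$ (i,j)"
        by (simp add: algebra_simps)
      also have "\<dots> = 0" by (simp only: c[symmetric]) simp
      finally have eq: "U $$ (i,j) * (U $$ (i,i) + U $$ (j,j) - 1) = 0" .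
      have "U $$ (i,i) + U $$ (j,j) \<noteq> 1"
      proof (cases "j < r")
        case True then show ?thesis using h d1 by auto
      next
        case False then show ?thesis using h diag0 by auto
      qed
      then show "U $$ (i,j) = 0" using eq by auto
    qed
  qed
  show "U $$ (i,j) = 0" if "i < j" "j < d" "(i < r \<longleftrightarrow> j < r)" for i j
    using main[of "j - i"] that by auto
qed


lemma subrep:
  fixes \<sigma> :: "'a \<Rightarrow> complex mat"
  assumes rep: "is_rep G T d \<sigma>" and P: "P \<in> carrier_mat d d" and idem: "P * P = P"
    and comm: "\<forall>t\<in>T. \<sigma> t * P = P * \<sigma> t"
  shows "\<exists>r \<rho>. is_rep G T r \<rho> \<and> (\<forall>t\<in>T. mat_trace (\<rho> t) = mat_trace (P * \<sigma> t))"
proof -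
  have sc: "\<And>t. t \<in> T \<Longrightarrow> \<sigma> t \<in> carrier_mat d d" and s1: "\<sigma> \<one>\<^bsub>G\<^esub> = 1\<^sub>m d"
    and sm: "\<And>g h. g \<in> T \<Longrightarrow> h \<in> T \<Longrightarrow> \<sigma> (g \<otimes>\<^bsub>G\<^esub> h) = \<sigma> g * \<sigma> h"
    using rep unfolding is_rep_def by auto
  obtain as where cp: "char_poly P = (\<Prod>a\<leftarrow>as. [:- a, 1:])" using char_poly_factorized[OF P] by auto
  define es where "es = filter (\<lambda>a. a = 1) as @ filter (\<lambda>a. \<not> a = 1) as"
  define r where "r = length (filter (\<lambda>a. a = (1::complex)) as)"
  have cp2: "char_poly P = (\<Prod>a\<leftarrow>es. [:- a, 1:])"
    unfolding cp es_def by (simp add: prod_list_filter_split)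
  obtain U Pm Q where sd: "schur_decomposition P es = (U, Pm, Q)" by (cases "schur_decomposition P es") auto
  from schur_decomposition[OF P cp2 sd] have sim: "similar_mat_wit P U Pm Q" and ut: "upper_triangular U"
    and dg: "diag_mat U = es" by auto
  from sim P have U: "U \<in> carrier_mat d d" and Pm: "Pm \<in> carrier_mat d d" and Q: "Q \<in> carrier_mat d d"
    and PmQ: "Pm * Q = 1\<^sub>m d" and QPm: "Q * Pm = 1\<^sub>m d" and PU: "P = Pm * U * Q"
    unfolding similar_mat_wit_def Let_def by auto
  have len: "length es = d" using dg U unfolding diag_mat_def by auto
  have rd: "r \<le> d" using len unfolding es_def r_def by simp
  have Uii: "U $$ (i,i) = es ! i" if "i < d" for i
  proof -
    have "es ! i = diag_mat U ! i" using dg by simp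
    also have "\<dots> = U $$ (i,i)" unfolding diag_mat_def using U that by simp
    finally show ?thesis by simp
  qed
  have d1: "U $$ (i,i) = 1" if "i < r" for i
  proof -
    have "i < d" using that rd by simp
    then have "U $$ (i,i) = filter (\<lambda>a. a = 1) as ! i" using Uii that unfolding es_def r_def by (simp add: nth_append)
    also have "\<dots> = 1" using nth_mem[of i "filter (\<lambda>a. a = 1) as"] that unfolding r_def by auto
    finally show ?thesis .
  qed
  have dn: "U $$ (i,i) \<noteq> 1" if "r \<le> i" "i < d" for i
  proof -
    have "U $$ (i,i) = filter (\<lambda>a. \<not> a = 1) as ! (i - r)" using Uii that unfolding es_def r_def by (simp add: nth_append)
    moreover have "i - r < length (filter (\<lambda>a. \<not> a = 1) as)" using that len unfolding es_def r_def by simp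
    ultimately show ?thesis using nth_mem[of "i - r" "filter (\<lambda>a. \<not> a = 1) as"] by auto
  qed
  have mc: "\<And>(A :: complex mat) B. A \<in> carrier_mat d d \<Longrightarrow> B \<in> carrier_mat d d \<Longrightarrow> A * B \<in> carrier_mat d d" by auto
  have as: "\<And>(A :: complex mat) B C. A \<in> carrier_mat d d \<Longrightarrow> B \<in> carrier_mat d d \<Longrightarrow> C \<in> carrier_mat d d \<Longrightarrow> A * B * C = A * (B * C)"
    by (rule assoc_mult_mat) auto
  have PmQY: "\<And>(Y :: complex mat). Y \<in> carrier_mat d d \<Longrightarrow> Pm * (Q * Y) = Y" using as[OF Pm Q] PmQ by auto
  have QPmY: "\<And>(Y :: complex mat). Y \<in> carrier_mat d d \<Longrightarrow> Q * (Pm * Y) = Y" using as[OF Q Pm] QPm by auto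
  have PPY: "\<And>(Y :: complex mat). Y \<in> carrier_mat d d \<Longrightarrow> P * (P * Y) = P * Y" using as[OF P P] idem by auto
  have sPY: "\<And>t (Y :: complex mat). t \<in> T \<Longrightarrow> Y \<in> carrier_mat d d \<Longrightarrow> \<sigma> t * (P * Y) = P * (\<sigma> t * Y)"
  proof -
    fix t and Y :: "complex mat" assume t: "t \<in> T" and Y: "Y \<in> carrier_mat d d"
    have "\<sigma> t * (P * Y) = (\<sigma> t * P) * Y" using as[OF sc[OF t] P Y] by simp
    also have "\<dots> = (P * \<sigma> t) * Y" using comm t by simp
    also have "\<dots> = P * (\<sigma> t * Y)" using as[OF P sc[OF t] Y] by simp
    finally show "\<sigma> t * (P * Y) = P * (\<sigma> t * Y)" .
  qed
  have r1: "\<And>(A :: complex mat). A \<in> carrier_mat d d \<Longrightarrow> A * 1\<^sub>m d = A" by simp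
  have l1: "\<And>(A :: complex mat). A \<in> carrier_mat d d \<Longrightarrow> 1\<^sub>m d * A = A" by simp
  note simps = r1 l1 as mc PmQY QPmY PPY sPY U Pm Q P sc QPm PmQ
  have UQ: "U = Q * P * Pm" unfolding PU using U Pm Q by (simp add: simps)
  have Uidem: "U * U = U" unfolding UQ using U Pm Q by (simp add: simps)
  note ui = ut_idem[OF U ut Uidem d1 dn rd]
  have low: "\<And>i l. i < d \<Longrightarrow> l < i \<Longrightarrow> U $$ (i,l) = 0" using ut U unfolding upper_triangular_def by auto
  define M where "M = (\<lambda>g. Q * \<sigma> g * Pm)"
  have Mc: "\<And>t. t \<in> T \<Longrightarrow> M t \<in> carrier_mat d d" unfolding M_def using sc Q Pm by auto
  have MU: "M t * U = U * M t" if t: "t \<in> T" for t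
    unfolding M_def UQ using t by (simp add: simps)
  have Mblk: "M t $$ (i,j) = 0" if t: "t \<in> T" and ij: "r \<le> i" "i < d" "j < r" for t i j
  proof -
    have j: "j < d" using ij rd by simp
    have "(M t * U) $$ (i,j) = (\<Sum>l<d. M t $$ (i,l) * U $$ (l,j))" using Mc[OF t] U ij j by (intro mult_entry[of _ d d _ d]) auto
    also have "\<dots> = M t $$ (i,j) * U $$ (j,j)"
    proof (rule sum_single)
      fix l assume l: "l \<in> {..<d}" "l \<noteq> j"
      show "M t $$ (i,l) * U $$ (l,j) = 0"
      proof (cases "l < j")
        case True then show ?thesis using ui(2)[of l j] ij j by simp
      next
        case False then show ?thesis using low[of l j] l by simp
      qed
    qed (use j in auto)
    finally have a: "(M t * U) $$ (i,j) = M t $$ (i,j)" using d1 ij by simp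
    have "(U * M t) $$ (i,j) = (\<Sum>l<d. U $$ (i,l) * M t $$ (l,j))" using Mc[OF t] U ij j by (intro mult_entry[of _ d d _ d]) auto
    also have "\<dots> = U $$ (i,i) * M t $$ (i,j)"
    proof (rule sum_single)
      fix l assume l: "l \<in> {..<d}" "l \<noteq> i"
      show "U $$ (i,l) * M t $$ (l,j) = 0"
      proof (cases "l < i")
        case True then show ?thesis using low[of i l] ij by simp
      next
        case False then show ?thesis using ui(2)[of i l] ij l by simp
      qed
    qed (use ij in auto)
    finally have b: "(U * M t) $$ (i,j) = 0" using ui(1) ij by simp
    show ?thesis using a b MU[OF t] by simp
  qed
  define \<rho> where "\<rho> = (\<lambda>g. mat r r (\<lambda>(i,j). M g $$ (i,j)))"
  have rep': "is_rep G T r \<rho>"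
    unfolding is_rep_def
  proof (intro conjI ballI)
    fix g assume "g \<in> T" then show "\<rho> g \<in> carrier_mat r r" unfolding \<rho>_def by simp
  next
    have "M \<one>\<^bsub>G\<^esub> = 1\<^sub>m d" unfolding M_def s1 using Q Pm QPm by simp
    then show "\<rho> \<one>\<^bsub>G\<^esub> = 1\<^sub>m r" unfolding \<rho>_def using rd by (intro eq_matI) auto
  next
    fix g h assume g: "g \<in> T" and h: "h \<in> T"
    have Mgh: "M (g \<otimes>\<^bsub>G\<^esub> h) = M g * M h" unfolding M_def sm[OF g h] using g h by (simp add: simps)
    show "\<rho> (g \<otimes>\<^bsub>G\<^esub> h) = \<rho> g * \<rho> h"
    proof (rule eq_matI)
      fix i j assume "i < dim_row (\<rho> g * \<rho> h)" "j < dim_col (\<rho> g * \<rho> h)"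
      then have ij: "i < r" "j < r" unfolding \<rho>_def by auto
      have "\<rho> (g \<otimes>\<^bsub>G\<^esub> h) $$ (i,j) = (M g * M h) $$ (i,j)" unfolding \<rho>_def Mgh using ij by simp
      also have "\<dots> = (\<Sum>l<d. M g $$ (i,l) * M h $$ (l,j))" using Mc g h ij rd by (intro mult_entry[of _ d d _ d]) auto
      also have "\<dots> = (\<Sum>l<r. M g $$ (i,l) * M h $$ (l,j))"
        using Mblk[OF h] ij rd by (intro sum.mono_neutral_right) auto
      also have "\<dots> = (\<rho> g * \<rho> h) $$ (i,j)" unfolding \<rho>_def using ij by (subst mult_entry[of _ r r _ r]) auto
      finally show "\<rho> (g \<otimes>\<^bsub>G\<^esub> h) $$ (i,j) = (\<rho> g * \<rho> h) $$ (i,j)" .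
    qed (auto simp: \<rho>_def)
  qed
  have tr: "mat_trace (\<rho> t) = mat_trace (P * \<sigma> t)" if t: "t \<in> T" for t
  proof -
    have "mat_trace (P * \<sigma> t) = mat_trace (Pm * (U * Q * \<sigma> t))" unfolding PU using t by (simp add: simps)
    also have "\<dots> = mat_trace ((U * Q * \<sigma> t) * Pm)" using t by (intro mat_trace_comm[of _ d d]) (auto simp: simps)
    also have "(U * Q * \<sigma> t) * Pm = U * M t" unfolding M_def using t by (simp add: simps)
    also have "mat_trace (U * M t) = (\<Sum>i<d. \<Sum>l<d. U $$ (i,l) * M t $$ (l,i))"
      unfolding mat_trace_def using U Mc[OF t] by (auto intro!: sum.cong simp del: index_mult_mat(1) simp: mult_entry[of _ d d _ d])
    also have "\<dots> = (\<Sum>i<d. if i < r then M t $$ (i,i) else 0)"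
    proof (rule sum.cong[OF refl])
      fix i assume i: "i \<in> {..<d}"
      show "(\<Sum>l<d. U $$ (i,l) * M t $$ (l,i)) = (if i < r then M t $$ (i,i) else 0)"
      proof (cases "i < r")
        case True
        have "(\<Sum>l<d. U $$ (i,l) * M t $$ (l,i)) = U $$ (i,i) * M t $$ (i,i)"
        proof (rule sum_single)
          fix l assume l: "l \<in> {..<d}" "l \<noteq> i"
          show "U $$ (i,l) * M t $$ (l,i) = 0"
          proof (cases "l < i")
            case True then show ?thesis using low[of i l] i by simp
          next
            case False
            show ?thesis
            proof (cases "l < r")
              case True then show ?thesis using ui(2)[of i l] False l \<open>i < r\<close> by simp
            next
              case False then show ?thesis using Mblk[OF t, of l i] l \<open>i < r\<close> by simp
            qed
          qed
        qed (use i in auto)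
        then show ?thesis using True d1 by simp
      next
        case False
        have "(\<Sum>l<d. U $$ (i,l) * M t $$ (l,i)) = 0"
        proof (rule sum.neutral, rule ballI)
          fix l assume l: "l \<in> {..<d}"
          show "U $$ (i,l) * M t $$ (l,i) = 0"
          proof (cases "l < i")
            case True then show ?thesis using low[of i l] i by simp
          next
            case f2: False
            show ?thesis
            proof (cases "l = i")
              case True then show ?thesis using ui(1)[of i] False i by simp
            next
              case f3: False then show ?thesis using ui(2)[of i l] False f2 l by simp
            qed
          qed
        qed
        then show ?thesis using False by simp
      qed
    qed
    also have "\<dots> = (\<Sum>i<r. if i < r then M t $$ (i,i) else 0)"
      using rd by (intro sum.mono_neutral_right) auto
    also have "\<dots> = (\<Sum>i<r. M t $$ (i,i))" by simp
    also have "\<dots> = mat_trace (\<rho> t)" unfolding mat_trace_def \<rho>_def by simp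
    finally show ?thesis by simp
  qed
  show ?thesis using rep' tr by blast
qed


definition proj :: "'a set \<Rightarrow> nat \<Rightarrow> ('a \<Rightarrow> complex mat) \<Rightarrow> ('a \<Rightarrow> complex) \<Rightarrow> complex mat" where
  "proj S d \<pi> c = mat d d (\<lambda>(i,j). \<Sum>s\<in>S. c s * \<pi> s $$ (i,j))"

lemma proj_carrier[simp]: "proj S d \<pi> c \<in> carrier_mat d d"
  by (simp add: proj_def)

lemma proj_dim[simp]: "dim_row (proj S d \<pi> c) = d" "dim_col (proj S d \<pi> c) = d"
  by (simp_all add: proj_def)

lemma proj_index[simp]: "i < d \<Longrightarrow> j < d \<Longrightarrow> proj S d \<pi> c $$ (i,j) = (\<Sum>s\<in>S. c s * \<pi> s $$ (i,j))"
  by (simp add: proj_def)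

lemma mult_proj_entry:
  assumes "A \<in> carrier_mat d d" "\<forall>s\<in>S. \<pi> s \<in> carrier_mat d d" "i < d" "j < d"
  shows "(A * proj S d \<pi> c) $$ (i,j) = (\<Sum>s\<in>S. c s * (A * \<pi> s) $$ (i,j))"
proof -
  have "(A * proj S d \<pi> c) $$ (i,j) = (\<Sum>l<d. A $$ (i,l) * (\<Sum>s\<in>S. c s * \<pi> s $$ (l,j)))"
    using assms by (simp del: index_mult_mat(1) add: mult_entry[of _ d d _ d])
  also have "\<dots> = (\<Sum>s\<in>S. c s * (\<Sum>l<d. A $$ (i,l) * \<pi> s $$ (l,j)))"
    unfolding sum_distrib_left by (rule trans[OF sum.swap]) (simp add: algebra_simps)
  also have "\<dots> = (\<Sum>s\<in>S. c s * (A * \<pi> s) $$ (i,j))"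
    using assms by (intro sum.cong refl) (simp del: index_mult_mat(1) add: mult_entry[of _ d d _ d])
  finally show ?thesis .
qed

lemma proj_mult_entry:
  assumes "A \<in> carrier_mat d d" "\<forall>s\<in>S. \<pi> s \<in> carrier_mat d d" "i < d" "j < d"
  shows "(proj S d \<pi> c * A) $$ (i,j) = (\<Sum>s\<in>S. c s * (\<pi> s * A) $$ (i,j))"
proof -
  have "(proj S d \<pi> c * A) $$ (i,j) = (\<Sum>l<d. (\<Sum>s\<in>S. c s * \<pi> s $$ (i,l)) * A $$ (l,j))"
    using assms by (simp del: index_mult_mat(1) add: mult_entry[of _ d d _ d])
  also have "\<dots> = (\<Sum>s\<in>S. c s * (\<Sum>l<d. \<pi> s $$ (i,l) * A $$ (l,j)))"
    unfolding sum_distrib_left sum_distrib_right by (rule trans[OF sum.swap]) (simp add: algebra_simps)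
  also have "\<dots> = (\<Sum>s\<in>S. c s * (\<pi> s * A) $$ (i,j))"
    using assms by (intro sum.cong refl) (simp del: index_mult_mat(1) add: mult_entry[of _ d d _ d])
  finally show ?thesis .
qed

lemma trace_mult_proj:
  assumes "A \<in> carrier_mat d d" "\<forall>s\<in>S. \<pi> s \<in> carrier_mat d d"
  shows "mat_trace (A * proj S d \<pi> c) = (\<Sum>s\<in>S. c s * mat_trace (A * \<pi> s))"
proof -
  have "mat_trace (A * proj S d \<pi> c) = (\<Sum>i<d. \<Sum>s\<in>S. c s * (A * \<pi> s) $$ (i,i))"
    unfolding mat_trace_def using assms by (auto intro!: sum.cong simp del: index_mult_mat(1) simp: mult_proj_entry)
  also have "\<dots> = (\<Sum>s\<in>S. c s * mat_trace (A * \<pi> s))"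
    unfolding mat_trace_def using assms by (subst sum.swap) (simp add: sum_distrib_left)
  finally show ?thesis .
qed

context group
begin

lemma cancel_l1: "a \<in> carrier G \<Longrightarrow> x \<in> carrier G \<Longrightarrow> a \<otimes> (inv a \<otimes> x) = x"
proof -
  assume a: "a \<in> carrier G" and x: "x \<in> carrier G"
  have "a \<otimes> (inv a \<otimes> x) = (a \<otimes> inv a) \<otimes> x" by (rule m_assoc[symmetric]) (use a x in auto)
  also have "\<dots> = x" using a x by simp
  finally show ?thesis .
qed

lemma cancel_l2: "a \<in> carrier G \<Longrightarrow> x \<in> carrier G \<Longrightarrow> inv a \<otimes> (a \<otimes> x) = x"
proof -
  assume a: "a \<in> carrier G" and x: "x \<in> carrier G"
  have "inv a \<otimes> (a \<otimes> x) = (inv a \<otimes> a) \<otimes> x" by (rule m_assoc[symmetric]) (use a x in auto)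
  also have "\<dots> = x" using a x by simp
  finally show ?thesis .
qed

lemma subgroup_left_bij:
  assumes "subgroup S G" "a \<in> S"
  shows "bij_betw (\<lambda>c. inv a \<otimes> c) S S"
proof (rule bij_betwI[where g = "\<lambda>c. a \<otimes> c"])
  interpret subgroup S G by fact
  show "(\<lambda>c. inv a \<otimes> c) \<in> S \<rightarrow> S" using assms by auto
  show "(\<lambda>c. a \<otimes> c) \<in> S \<rightarrow> S" using assms by auto
  fix x assume "x \<in> S"
  then show "a \<otimes> (inv a \<otimes> x) = x" "inv a \<otimes> (a \<otimes> x) = x"
    using assms by (auto simp: m_assoc[symmetric])
qed

lemma normal_conj_bij:
  assumes "S \<lhd> G" "t \<in> carrier G"
  shows "bij_betw (\<lambda>s. inv t \<otimes> s \<otimes> t) S S"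
proof (rule bij_betwI[where g = "\<lambda>s. t \<otimes> s \<otimes> inv t"])
  interpret normal S G by fact
  show "(\<lambda>s. inv t \<otimes> s \<otimes> t) \<in> S \<rightarrow> S" using assms inv_op_closed1 by auto
  show "(\<lambda>s. t \<otimes> s \<otimes> inv t) \<in> S \<rightarrow> S" using assms inv_op_closed2 by auto
  fix x assume "x \<in> S"
  then have x: "x \<in> carrier G" using subset by auto
  show "t \<otimes> (inv t \<otimes> x \<otimes> t) \<otimes> inv t = x" using x assms
    by (simp add: m_assoc cancel_l1 cancel_l2)
  show "inv t \<otimes> (t \<otimes> x \<otimes> inv t) \<otimes> t = x" using x assms
    by (simp add: m_assoc cancel_l1 cancel_l2)
qed

lemma proj_mult:
  assumes "subgroup S G" "finite S"
    and car: "\<forall>s\<in>S. \<pi> s \<in> carrier_mat d d"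
    and mult: "\<forall>a\<in>S. \<forall>b\<in>S. \<pi> (a \<otimes> b) = \<pi> a * \<pi> b"
  shows "proj S d \<pi> c1 * proj S d \<pi> c2 = proj S d \<pi> (\<lambda>c. \<Sum>a\<in>S. c1 a * c2 (inv a \<otimes> c))"
proof (rule eq_matI)
  interpret subgroup S G by fact
  fix i j assume ij: "i < dim_row (proj S d \<pi> (\<lambda>c. \<Sum>a\<in>S. c1 a * c2 (inv a \<otimes> c)))"
    "j < dim_col (proj S d \<pi> (\<lambda>c. \<Sum>a\<in>S. c1 a * c2 (inv a \<otimes> c)))"
  then have i: "i < d" and j: "j < d" by auto
  have "(proj S d \<pi> c1 * proj S d \<pi> c2) $$ (i,j)
      = (\<Sum>l<d. (\<Sum>a\<in>S. c1 a * \<pi> a $$ (i,l)) * (\<Sum>b\<in>S. c2 b * \<pi> b $$ (l,j)))"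
    using i j by (simp del: index_mult_mat(1) add: mult_entry[of _ d d _ d])
  also have "\<dots> = (\<Sum>a\<in>S. \<Sum>b\<in>S. c1 a * c2 b * (\<Sum>l<d. \<pi> a $$ (i,l) * \<pi> b $$ (l,j)))"
    unfolding sum_product
  proof (subst sum.swap, intro sum.cong refl)
    fix a assume "a \<in> S"
    show "(\<Sum>l<d. \<Sum>b\<in>S. c1 a * \<pi> a $$ (i, l) * (c2 b * \<pi> b $$ (l, j))) =
         (\<Sum>b\<in>S. c1 a * c2 b * (\<Sum>l<d. \<pi> a $$ (i, l) * \<pi> b $$ (l, j)))"
      by (subst sum.swap) (simp add: sum_distrib_left algebra_simps)
  qed
  also have "\<dots> = (\<Sum>a\<in>S. \<Sum>b\<in>S. c1 a * c2 b * \<pi> (a \<otimes> b) $$ (i,j))"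
    using i j car mult by (intro sum.cong refl) (simp del: index_mult_mat(1) add: mult_entry[of _ d d _ d])
  also have "\<dots> = (\<Sum>a\<in>S. \<Sum>c\<in>S. c1 a * c2 (inv a \<otimes> c) * \<pi> c $$ (i,j))"
  proof (rule sum.cong[OF refl])
    fix a assume a: "a \<in> S"
    have "(\<Sum>c\<in>S. c1 a * c2 (inv a \<otimes> c) * \<pi> (a \<otimes> (inv a \<otimes> c)) $$ (i,j))
       = (\<Sum>b\<in>S. c1 a * c2 b * \<pi> (a \<otimes> b) $$ (i,j))"
      by (rule sum.reindex_bij_betw[OF subgroup_left_bij[OF assms(1) a]])
    moreover have "\<And>c. c \<in> S \<Longrightarrow> a \<otimes> (inv a \<otimes> c) = c"
      using a by (simp add: m_assoc[symmetric])
    ultimately show "(\<Sum>b\<in>S. c1 a * c2 b * \<pi> (a \<otimes> b) $$ (i,j))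
       = (\<Sum>c\<in>S. c1 a * c2 (inv a \<otimes> c) * \<pi> c $$ (i,j))"
      by simp
  qed
  also have "\<dots> = proj S d \<pi> (\<lambda>c. \<Sum>a\<in>S. c1 a * c2 (inv a \<otimes> c)) $$ (i,j)"
    using i j by (subst sum.swap) (simp add: sum_distrib_right)
  finally show "(proj S d \<pi> c1 * proj S d \<pi> c2) $$ (i,j) = proj S d \<pi> (\<lambda>c. \<Sum>a\<in>S. c1 a * c2 (inv a \<otimes> c)) $$ (i,j)" .
qed auto


lemma proj_comm:
  assumes "S \<lhd> G" "t \<in> carrier G"
    and car: "\<forall>s\<in>S. \<pi> s \<in> carrier_mat d d" "\<pi> t \<in> carrier_mat d d"
    and m1: "\<forall>s\<in>S. \<pi> (t \<otimes> s) = \<pi> t * \<pi> s"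
    and m2: "\<forall>s\<in>S. \<pi> (s \<otimes> t) = \<pi> s * \<pi> t"
    and inv: "\<forall>s\<in>S. c (t \<otimes> s \<otimes> inv t) = c s"
  shows "\<pi> t * proj S d \<pi> c = proj S d \<pi> c * \<pi> t"
proof (rule eq_matI)
  interpret N: normal S G by fact
  fix i j assume "i < dim_row (proj S d \<pi> c * \<pi> t)" "j < dim_col (proj S d \<pi> c * \<pi> t)"
  then have i: "i < d" and j: "j < d" using car by auto
  have "(\<pi> t * proj S d \<pi> c) $$ (i,j) = (\<Sum>s\<in>S. c s * \<pi> (t \<otimes> s) $$ (i,j))"
    using car i j m1 by (subst mult_proj_entry[OF car(2) car(1) i j]) (auto intro!: sum.cong)
  also have "\<dots> = (\<Sum>s\<in>S. c (inv t \<otimes> s \<otimes> t) * \<pi> (t \<otimes> (inv t \<otimes> s \<otimes> t)) $$ (i,j))"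
    by (rule sum.reindex_bij_betw[OF normal_conj_bij[OF assms(1,2)], symmetric])
  also have "\<dots> = (\<Sum>s\<in>S. c s * \<pi> (s \<otimes> t) $$ (i,j))"
  proof (rule sum.cong[OF refl])
    fix s assume s: "s \<in> S"
    then have sc: "s \<in> carrier G" using N.subset by auto
    have e1: "t \<otimes> (inv t \<otimes> s \<otimes> t) = s \<otimes> t"
      using sc assms(2) by (simp add: m_assoc cancel_l1)
    have "inv t \<otimes> s \<otimes> t \<in> S" using N.inv_op_closed1 s assms(2) by auto
    then have "c (t \<otimes> (inv t \<otimes> s \<otimes> t) \<otimes> inv t) = c (inv t \<otimes> s \<otimes> t)" using inv by auto
    moreover have "t \<otimes> (inv t \<otimes> s \<otimes> t) \<otimes> inv t = s"
      using sc assms(2) by (simp add: m_assoc cancel_l1)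
    ultimately show "c (inv t \<otimes> s \<otimes> t) * \<pi> (t \<otimes> (inv t \<otimes> s \<otimes> t)) $$ (i,j) = c s * \<pi> (s \<otimes> t) $$ (i,j)"
      using e1 by simp
  qed
  also have "\<dots> = (proj S d \<pi> c * \<pi> t) $$ (i,j)"
    using car i j m2 by (subst proj_mult_entry[OF car(2) car(1) i j]) (auto intro!: sum.cong)
  finally show "(\<pi> t * proj S d \<pi> c) $$ (i,j) = (proj S d \<pi> c * \<pi> t) $$ (i,j)" .
qed (use car in auto)

end

lemma mat_vec_zero: "A \<in> carrier_mat k m \<Longrightarrow> A *\<^sub>v 0\<^sub>v m = 0\<^sub>v k"
  by (intro eq_vecI) (auto simp: scalar_prod_def)

lemma mat_entry_unit: "(A :: complex mat) \<in> carrier_mat k m \<Longrightarrow> i < k \<Longrightarrow> j < m \<Longrightarrow> (A *\<^sub>v unit_vec m j) $ i = A $$ (i,j)"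
  using scalar_prod_right_unit[of j m "row A i"] by simp

lemma mat_zero_if_unit: assumes "(A :: complex mat) \<in> carrier_mat k m" "\<forall>j<m. A *\<^sub>v unit_vec m j = 0\<^sub>v k"
  shows "A = 0\<^sub>m k m"
proof (rule eq_matI)
  fix i j assume "i < dim_row (0\<^sub>m k m :: complex mat)" "j < dim_col (0\<^sub>m k m :: complex mat)"
  then have ij: "i < k" "j < m" by auto
  have "A $$ (i,j) = (A *\<^sub>v unit_vec m j) $ i" using mat_entry_unit[OF assms(1) ij] by simp
  then show "A $$ (i,j) = 0\<^sub>m k m $$ (i,j)" using assms ij by simp
qed (use assms in auto)

lemma schur2:
  assumes irr: "irr_rep G S m \<rho>" and A: "(A :: complex mat) \<in> carrier_mat m m"
    and comm: "\<forall>g\<in>S. A * \<rho> g = \<rho> g * A"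
  shows "\<exists>c. A = c \<cdot>\<^sub>m 1\<^sub>m m"
proof -
  from irr have rep: "is_rep G S m \<rho>" and m: "m > 0"
    and irrW: "\<And>W. is_subspace m W \<Longrightarrow> (\<forall>g\<in>S. \<forall>w\<in>W. \<rho> g *\<^sub>v w \<in> W) \<Longrightarrow> W = {0\<^sub>v m} \<or> W = carrier_vec m"
    unfolding irr_rep_def by auto
  from rep have car: "\<And>g. g \<in> S \<Longrightarrow> \<rho> g \<in> carrier_mat m m" unfolding is_rep_def by auto
  have "Polynomial.degree (char_poly A) = m" using degree_monic_char_poly[OF A] by auto
  then obtain c where "poly (char_poly A) c = 0" using m alg_closed_imp_poly_has_root by force
  then have "eigenvalue A c" using eigenvalue_root_char_poly[OF A] by auto
  then obtain v where v: "v \<in> carrier_vec m" "v \<noteq> 0\<^sub>v m" "A *\<^sub>v v = c \<cdot>\<^sub>v v"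
    unfolding eigenvalue_def eigenvector_def using A by auto
  define W where "W = {w \<in> carrier_vec m. A *\<^sub>v w = c \<cdot>\<^sub>v w}"
  have sub: "is_subspace m W"
    unfolding is_subspace_def W_def
  proof (intro conjI ballI allI)
    show "0\<^sub>v m \<in> {w \<in> carrier_vec m. A *\<^sub>v w = c \<cdot>\<^sub>v w}"
      using mat_vec_zero[OF A] by auto
    fix x y assume x: "x \<in> {w \<in> carrier_vec m. A *\<^sub>v w = c \<cdot>\<^sub>v w}" and y: "y \<in> {w \<in> carrier_vec m. A *\<^sub>v w = c \<cdot>\<^sub>v w}"
    then show "x + y \<in> {w \<in> carrier_vec m. A *\<^sub>v w = c \<cdot>\<^sub>v w}"
      using A by (auto simp: mult_add_distrib_mat_vec smult_add_distrib_vec)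
  next
    fix k x assume x: "x \<in> {w \<in> carrier_vec m. A *\<^sub>v w = c \<cdot>\<^sub>v w}"
    then show "k \<cdot>\<^sub>v x \<in> {w \<in> carrier_vec m. A *\<^sub>v w = c \<cdot>\<^sub>v w}"
      using A by (auto simp: mult_mat_vec smult_smult_assoc mult.commute)
  qed auto
  have inv: "\<forall>g\<in>S. \<forall>w\<in>W. \<rho> g *\<^sub>v w \<in> W"
  proof (intro ballI)
    fix g w assume g: "g \<in> S" and w: "w \<in> W"
    have "A *\<^sub>v (\<rho> g *\<^sub>v w) = (A * \<rho> g) *\<^sub>v w" using A car[OF g] w W_def by auto
    also have "\<dots> = (\<rho> g * A) *\<^sub>v w" using comm g by simp
    also have "\<dots> = \<rho> g *\<^sub>v (c \<cdot>\<^sub>v w)" using A car[OF g] w W_def by auto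
    also have "\<dots> = c \<cdot>\<^sub>v (\<rho> g *\<^sub>v w)" using car[OF g] w W_def by (auto simp: mult_mat_vec)
    finally show "\<rho> g *\<^sub>v w \<in> W" using car[OF g] w W_def by auto
  qed
  have "v \<in> W" using v W_def by auto
  then have "W = carrier_vec m" using irrW[OF sub inv] v by auto
  then have all: "\<And>w. w \<in> carrier_vec m \<Longrightarrow> A *\<^sub>v w = c \<cdot>\<^sub>v w" unfolding W_def by auto
  have "A = c \<cdot>\<^sub>m 1\<^sub>m m"
  proof (rule eq_matI)
    fix i j assume "i < dim_row (c \<cdot>\<^sub>m 1\<^sub>m m)" "j < dim_col (c \<cdot>\<^sub>m (1\<^sub>m m :: complex mat))"
    then have ij: "i < m" "j < m" by auto
    have "A $$ (i,j) = (A *\<^sub>v unit_vec m j) $ i" using mat_entry_unit[OF A ij] by simp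
    also have "\<dots> = (c \<cdot>\<^sub>v unit_vec m j) $ i" using all[of "unit_vec m j"] ij by simp
    finally show "A $$ (i,j) = (c \<cdot>\<^sub>m 1\<^sub>m m) $$ (i,j)" using ij by simp
  qed (use A in auto)
  then show ?thesis by blast
qed


lemma mult_mat_entry_vec:
  assumes "(A :: complex mat) \<in> carrier_mat k m" "B \<in> carrier_mat m n" "i < k" "j < n"
  shows "(A * B) $$ (i,j) = (A *\<^sub>v col B j) $ i"
  using assms by simp

lemma schur1:
  assumes irr1: "irr_rep G S k \<rho>1" and irr2: "irr_rep G S m \<rho>2"
    and A: "(A :: complex mat) \<in> carrier_mat k m"
    and comm: "\<forall>g\<in>S. \<rho>1 g * A = A * \<rho>2 g" and nz: "A \<noteq> 0\<^sub>m k m"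
  shows "\<forall>g\<in>S. mat_trace (\<rho>1 g) = mat_trace (\<rho>2 g)"
proof -
  from irr1 have car1: "\<And>g. g \<in> S \<Longrightarrow> \<rho>1 g \<in> carrier_mat k k"
    and irrW1: "\<And>W. is_subspace k W \<Longrightarrow> (\<forall>g\<in>S. \<forall>w\<in>W. \<rho>1 g *\<^sub>v w \<in> W) \<Longrightarrow> W = {0\<^sub>v k} \<or> W = carrier_vec k"
    unfolding irr_rep_def is_rep_def by auto
  from irr2 have car2: "\<And>g. g \<in> S \<Longrightarrow> \<rho>2 g \<in> carrier_mat m m"
    and irrW2: "\<And>W. is_subspace m W \<Longrightarrow> (\<forall>g\<in>S. \<forall>w\<in>W. \<rho>2 g *\<^sub>v w \<in> W) \<Longrightarrow> W = {0\<^sub>v m} \<or> W = carrier_vec m"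
    unfolding irr_rep_def is_rep_def by auto
  define N where "N = {v \<in> carrier_vec m. A *\<^sub>v v = 0\<^sub>v k}"
  have subN: "is_subspace m N"
    unfolding is_subspace_def N_def
  proof (intro conjI ballI allI)
    show "0\<^sub>v m \<in> {v \<in> carrier_vec m. A *\<^sub>v v = 0\<^sub>v k}"
      using mat_vec_zero[OF A] by auto
    fix x y assume x: "x \<in> {v \<in> carrier_vec m. A *\<^sub>v v = 0\<^sub>v k}" and y: "y \<in> {v \<in> carrier_vec m. A *\<^sub>v v = 0\<^sub>v k}"
    then show "x + y \<in> {v \<in> carrier_vec m. A *\<^sub>v v = 0\<^sub>v k}"
      using A by (auto simp: mult_add_distrib_mat_vec)
  next
    fix c x assume x: "x \<in> {v \<in> carrier_vec m. A *\<^sub>v v = 0\<^sub>v k}"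
    then show "c \<cdot>\<^sub>v x \<in> {v \<in> carrier_vec m. A *\<^sub>v v = 0\<^sub>v k}"
      using A by (auto simp: mult_mat_vec)
  qed auto
  have invN: "\<forall>g\<in>S. \<forall>w\<in>N. \<rho>2 g *\<^sub>v w \<in> N"
  proof (intro ballI)
    fix g w assume g: "g \<in> S" and w: "w \<in> N"
    have "A *\<^sub>v (\<rho>2 g *\<^sub>v w) = (A * \<rho>2 g) *\<^sub>v w" using A car2[OF g] w N_def by auto
    also have "\<dots> = (\<rho>1 g * A) *\<^sub>v w" using comm g by simp
    also have "\<dots> = \<rho>1 g *\<^sub>v 0\<^sub>v k" using A car1[OF g] w N_def by auto
    also have "\<dots> = 0\<^sub>v k" using mat_vec_zero car1[OF g] by auto
    finally show "\<rho>2 g *\<^sub>v w \<in> N" using car2[OF g] w N_def by auto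
  qed
  have "N \<noteq> carrier_vec m"
  proof
    assume NC: "N = carrier_vec m"
    have "\<forall>j<m. A *\<^sub>v unit_vec m j = 0\<^sub>v k"
    proof (intro allI impI)
      fix j assume "j < m"
      then have "unit_vec m j \<in> N" using NC by simp
      then show "A *\<^sub>v unit_vec m j = 0\<^sub>v k" unfolding N_def by simp
    qed
    then show False using mat_zero_if_unit[OF A] nz by auto
  qed
  then have N0: "N = {0\<^sub>v m}" using irrW2[OF subN invN] by auto
  define W where "W = (\<lambda>v. A *\<^sub>v v) ` carrier_vec m"
  have subW: "is_subspace k W"
    unfolding is_subspace_def W_def
  proof (intro conjI ballI allI)
    show "(\<lambda>v. A *\<^sub>v v) ` carrier_vec m \<subseteq> carrier_vec k" using A by auto
    show "0\<^sub>v k \<in> (\<lambda>v. A *\<^sub>v v) ` carrier_vec m"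
      using mat_vec_zero[OF A] by (intro image_eqI[of _ _ "0\<^sub>v m"]) auto
    fix x y assume x: "x \<in> (\<lambda>v. A *\<^sub>v v) ` carrier_vec m" and y: "y \<in> (\<lambda>v. A *\<^sub>v v) ` carrier_vec m"
    then obtain a b where "a \<in> carrier_vec m" "b \<in> carrier_vec m" "x = A *\<^sub>v a" "y = A *\<^sub>v b" by auto
    then have "x + y = A *\<^sub>v (a + b)" "a + b \<in> carrier_vec m" using A by (simp_all add: mult_add_distrib_mat_vec)
    then show "x + y \<in> (\<lambda>v. A *\<^sub>v v) ` carrier_vec m" by auto
  next
    fix c x assume x: "x \<in> (\<lambda>v. A *\<^sub>v v) ` carrier_vec m"
    then obtain a where "a \<in> carrier_vec m" "x = A *\<^sub>v a" by auto
    then have "c \<cdot>\<^sub>v x = A *\<^sub>v (c \<cdot>\<^sub>v a)" "c \<cdot>\<^sub>v a \<in> carrier_vec m" using A by (simp_all add: mult_mat_vec)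
    then show "c \<cdot>\<^sub>v x \<in> (\<lambda>v. A *\<^sub>v v) ` carrier_vec m" by auto
  qed
  have invW: "\<forall>g\<in>S. \<forall>w\<in>W. \<rho>1 g *\<^sub>v w \<in> W"
  proof (intro ballI)
    fix g w assume g: "g \<in> S" and w: "w \<in> W"
    then obtain a where a: "a \<in> carrier_vec m" "w = A *\<^sub>v a" unfolding W_def by auto
    have "\<rho>1 g *\<^sub>v w = (\<rho>1 g * A) *\<^sub>v a" using A car1[OF g] a by auto
    also have "\<dots> = (A * \<rho>2 g) *\<^sub>v a" using comm g by simp
    also have "\<dots> = A *\<^sub>v (\<rho>2 g *\<^sub>v a)" using A car2[OF g] a by auto
    finally show "\<rho>1 g *\<^sub>v w \<in> W" unfolding W_def using car2[OF g] a by auto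
  qed
  have "W \<noteq> {0\<^sub>v k}"
  proof
    assume W0: "W = {0\<^sub>v k}"
    have "\<forall>j<m. A *\<^sub>v unit_vec m j = 0\<^sub>v k"
    proof (intro allI impI)
      fix j assume "j < m"
      then have "A *\<^sub>v unit_vec m j \<in> W" unfolding W_def by auto
      then show "A *\<^sub>v unit_vec m j = 0\<^sub>v k" using W0 by simp
    qed
    then show False using mat_zero_if_unit[OF A] nz by auto
  qed
  then have Wall: "W = carrier_vec k" using irrW1[OF subW invW] by auto
  define B where "B = mat m k (\<lambda>(i,j). (SOME v. v \<in> carrier_vec m \<and> A *\<^sub>v v = unit_vec k j) $ i)"
  have B: "B \<in> carrier_mat m k" unfolding B_def by auto
  have colB: "\<And>j. j < k \<Longrightarrow> col B j \<in> carrier_vec m \<and> A *\<^sub>v col B j = unit_vec k j"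
  proof -
    fix j assume j: "j < k"
    have "unit_vec k j \<in> W" using Wall j by auto
    then have ex: "\<exists>v. v \<in> carrier_vec m \<and> A *\<^sub>v v = unit_vec k j" unfolding W_def by auto
    have "col B j = (SOME v. v \<in> carrier_vec m \<and> A *\<^sub>v v = unit_vec k j)"
      using j someI_ex[OF ex] unfolding B_def by (intro eq_vecI) auto
    then show "col B j \<in> carrier_vec m \<and> A *\<^sub>v col B j = unit_vec k j" using someI_ex[OF ex] by simp
  qed
  have AB: "A * B = 1\<^sub>m k"
  proof (rule eq_matI)
    fix i j assume "i < dim_row (1\<^sub>m k :: complex mat)" "j < dim_col (1\<^sub>m k :: complex mat)"
    then have ij: "i < k" "j < k" by auto
    have "(A * B) $$ (i,j) = (A *\<^sub>v col B j) $ i" using A B ij by simp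
    then show "(A * B) $$ (i,j) = 1\<^sub>m k $$ (i,j)" using colB ij by simp
  qed (use A B in auto)
  have BA: "B * A = 1\<^sub>m m"
  proof (rule eq_matI)
    fix i j assume "i < dim_row (1\<^sub>m m :: complex mat)" "j < dim_col (1\<^sub>m m :: complex mat)"
    then have ij: "i < m" "j < m" by auto
    define u where "u = (B * A) *\<^sub>v unit_vec m j - unit_vec m j"
    have u: "u \<in> carrier_vec m" unfolding u_def using A B by auto
    have e1: "A *\<^sub>v ((B * A) *\<^sub>v unit_vec m j) = (A * (B * A)) *\<^sub>v unit_vec m j"
      by (rule assoc_mult_mat_vec[symmetric]) (use A B in auto)
    have e2: "A * (B * A) = (A * B) * A"
      by (rule assoc_mult_mat[symmetric]) (use A B in auto)
    have "A *\<^sub>v u = A *\<^sub>v ((B * A) *\<^sub>v unit_vec m j) - A *\<^sub>v unit_vec m j"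
      unfolding u_def using A B by (simp add: mult_minus_distrib_mat_vec)
    also have "\<dots> = A *\<^sub>v unit_vec m j - A *\<^sub>v unit_vec m j"
      unfolding e1 e2 AB using A by simp
    finally have "A *\<^sub>v u = 0\<^sub>v k" using A by simp
    then have "u \<in> N" using u N_def by auto
    then have "u = 0\<^sub>v m" using N0 by auto
    then have "u $ i = 0" using ij by simp
    then have "((B * A) *\<^sub>v unit_vec m j) $ i = unit_vec m j $ i" unfolding u_def using ij A B by simp
    then show "(B * A) $$ (i,j) = 1\<^sub>m m $$ (i,j)" using mat_entry_unit[of "B * A" m m i j] A B ij by simp
  qed (use A B in auto)
  show ?thesis
  proof
    fix g assume g: "g \<in> S"
    have f1: "\<rho>1 g * (A * B) = (\<rho>1 g * A) * B"
      by (rule assoc_mult_mat[symmetric]) (use A B car1[OF g] in auto)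
    have f2: "B * (A * \<rho>2 g) = (B * A) * \<rho>2 g"
      by (rule assoc_mult_mat[symmetric]) (use A B car2[OF g] in auto)
    have "mat_trace (\<rho>1 g) = mat_trace (\<rho>1 g * (A * B))" using AB car1[OF g] by simp
    also have "\<dots> = mat_trace ((A * \<rho>2 g) * B)" unfolding f1 using comm g by simp
    also have "\<dots> = mat_trace (B * (A * \<rho>2 g))"
      using A B car2[OF g] by (intro mat_trace_comm[of _ k m]) auto
    also have "\<dots> = mat_trace (\<rho>2 g)" unfolding f2 BA using car2[OF g] by simp
    finally show "mat_trace (\<rho>1 g) = mat_trace (\<rho>2 g)" .
  qed
qed


lemma assoc4a:
  assumes "A \<in> carrier_mat n1 n2" "B \<in> carrier_mat n2 n3" "C \<in> carrier_mat n3 n4" "D \<in> carrier_mat n4 n5"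
  shows "A * (B * C * D) = A * B * C * D"
proof -
  have "A * B * C * D = A * (B * C) * D" using assms by (simp add: assoc_mult_mat[of A n1 n2 B n3 C n4])
  also have "\<dots> = A * (B * C * D)" using assms by (intro assoc_mult_mat) auto
  finally show ?thesis by simp
qed

lemma assoc4b:
  assumes "A \<in> carrier_mat n1 n2" "B \<in> carrier_mat n2 n3" "C \<in> carrier_mat n3 n4" "D \<in> carrier_mat n4 n5"
  shows "A * B * (C * D) = A * B * C * D"
  using assms by (intro assoc_mult_mat[symmetric]) auto

definition msum :: "nat \<Rightarrow> nat \<Rightarrow> 'a set \<Rightarrow> ('a \<Rightarrow> complex mat) \<Rightarrow> complex mat" where
  "msum k m S f = mat k m (\<lambda>(p,q). \<Sum>a\<in>S. f a $$ (p,q))"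

lemma msum_carrier[simp]: "msum k m S f \<in> carrier_mat k m" by (simp add: msum_def)
lemma msum_dim[simp]: "dim_row (msum k m S f) = k" "dim_col (msum k m S f) = m" by (simp_all add: msum_def)
lemma msum_index[simp]: "p < k \<Longrightarrow> q < m \<Longrightarrow> msum k m S f $$ (p,q) = (\<Sum>a\<in>S. f a $$ (p,q))"
  by (simp add: msum_def)

lemma msum_mult_left:
  assumes "B \<in> carrier_mat n k" "\<forall>a\<in>S. f a \<in> carrier_mat k m"
  shows "B * msum k m S f = msum n m S (\<lambda>a. B * f a)"
proof (rule eq_matI)
  fix i j assume "i < dim_row (msum n m S (\<lambda>a. B * f a))" "j < dim_col (msum n m S (\<lambda>a. B * f a))"
  then have i: "i < n" and j: "j < m" by auto
  have "(B * msum k m S f) $$ (i,j) = (\<Sum>l<k. B $$ (i,l) * (\<Sum>a\<in>S. f a $$ (l,j)))"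
    using assms i j by (simp del: index_mult_mat(1) add: mult_entry[of _ n k _ m])
  also have "\<dots> = (\<Sum>a\<in>S. (\<Sum>l<k. B $$ (i,l) * f a $$ (l,j)))"
    unfolding sum_distrib_left by (rule sum.swap)
  also have "\<dots> = (\<Sum>a\<in>S. (B * f a) $$ (i,j))"
    using assms i j by (intro sum.cong refl) (simp del: index_mult_mat(1) add: mult_entry[of _ n k _ m])
  finally show "(B * msum k m S f) $$ (i,j) = msum n m S (\<lambda>a. B * f a) $$ (i,j)" using i j by simp
qed (use assms in auto)

lemma msum_mult_right:
  assumes "B \<in> carrier_mat m n" "\<forall>a\<in>S. f a \<in> carrier_mat k m"
  shows "msum k m S f * B = msum k n S (\<lambda>a. f a * B)"
proof (rule eq_matI)
  fix i j assume "i < dim_row (msum k n S (\<lambda>a. f a * B))" "j < dim_col (msum k n S (\<lambda>a. f a * B))"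
  then have i: "i < k" and j: "j < n" by auto
  have "(msum k m S f * B) $$ (i,j) = (\<Sum>l<m. (\<Sum>a\<in>S. f a $$ (i,l)) * B $$ (l,j))"
    using assms i j by (simp del: index_mult_mat(1) add: mult_entry[of _ k m _ n])
  also have "\<dots> = (\<Sum>a\<in>S. (\<Sum>l<m. f a $$ (i,l) * B $$ (l,j)))"
    unfolding sum_distrib_right by (rule sum.swap)
  also have "\<dots> = (\<Sum>a\<in>S. (f a * B) $$ (i,j))"
    using assms i j by (intro sum.cong refl) (simp del: index_mult_mat(1) add: mult_entry[of _ k m _ n])
  finally show "(msum k m S f * B) $$ (i,j) = msum k n S (\<lambda>a. f a * B) $$ (i,j)" using i j by simp
qed (use assms in auto)

lemma msum_cong: "(\<And>a. a \<in> S \<Longrightarrow> f a = g a) \<Longrightarrow> msum k m S f = msum k m S g"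
  unfolding msum_def by (intro cong_mat refl) (auto intro!: sum.cong)

lemma msum_reindex: assumes "bij_betw h T S" shows "msum k m S f = msum k m T (\<lambda>a. f (h a))"
proof (rule eq_matI)
  fix i j assume "i < dim_row (msum k m T (\<lambda>a. f (h a)))" "j < dim_col (msum k m T (\<lambda>a. f (h a)))"
  then have ij: "i < k" "j < m" by auto
  show "msum k m S f $$ (i,j) = msum k m T (\<lambda>a. f (h a)) $$ (i,j)"
    using ij sum.reindex_bij_betw[OF assms, of "\<lambda>a. f a $$ (i,j)"] by simp
qed auto

lemma msum_trace: "\<forall>a\<in>S. f a \<in> carrier_mat k k \<Longrightarrow> mat_trace (msum k k S f) = (\<Sum>a\<in>S. mat_trace (f a))"
  unfolding mat_trace_def by simp (subst sum.swap, auto intro!: sum.cong)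

lemma unit_mat_entry:
  assumes "(A :: complex mat) \<in> carrier_mat k k" "B \<in> carrier_mat m m" "i < k" "j < m" "p < k" "q < m"
  shows "(A * mat k m (\<lambda>(r,s). if r = i \<and> s = j then 1 else 0) * B) $$ (p,q) = A $$ (p,i) * B $$ (j,q)"
proof -
  let ?E = "mat k m (\<lambda>(r,s). if r = i \<and> s = j then (1::complex) else 0)"
  have "(A * ?E * B) $$ (p,q) = (\<Sum>l<m. (A * ?E) $$ (p,l) * B $$ (l,q))"
    using assms by (intro mult_entry[of _ k m _ m]) auto
  also have "\<dots> = (\<Sum>l<m. (if l = j then A $$ (p,i) else 0) * B $$ (l,q))"
  proof (intro sum.cong refl)
    fix l assume l: "l \<in> {..<m}"
    have "(A * ?E) $$ (p,l) = (\<Sum>r<k. A $$ (p,r) * ?E $$ (r,l))"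
      using assms l by (intro mult_entry[of _ k k _ m]) auto
    also have "\<dots> = (\<Sum>r<k. if r = i then (if l = j then A $$ (p,i) else 0) else 0)"
      using l assms by (intro sum.cong refl) auto
    also have "\<dots> = (if l = j then A $$ (p,i) else 0)" using assms by simp
    finally show "(A * ?E) $$ (p,l) * B $$ (l,q) = (if l = j then A $$ (p,i) else 0) * B $$ (l,q)" by simp
  qed
  also have "\<dots> = (\<Sum>l<m. if l = j then A $$ (p,i) * B $$ (l,q) else 0)"
    by (intro sum.cong) auto
  also have "\<dots> = A $$ (p,i) * B $$ (j,q)" using assms by simp
  finally show ?thesis .
qed

context group
begin

lemma intertwine:
  assumes S: "subgroup S G" and rep1: "is_rep G S k \<rho>1" and rep2: "is_rep G S m \<rho>2"
    and Xm: "Xm \<in> carrier_mat k m" and b: "b \<in> S"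
  shows "\<rho>1 b * msum k m S (\<lambda>a. \<rho>1 a * Xm * \<rho>2 (inv a)) = msum k m S (\<lambda>a. \<rho>1 a * Xm * \<rho>2 (inv a)) * \<rho>2 b"
proof -
  have c1: "\<And>g. g \<in> S \<Longrightarrow> \<rho>1 g \<in> carrier_mat k k" and m1: "\<And>g h. g \<in> S \<Longrightarrow> h \<in> S \<Longrightarrow> \<rho>1 (g \<otimes> h) = \<rho>1 g * \<rho>1 h"
    using rep1 unfolding is_rep_def by auto
  have c2: "\<And>g. g \<in> S \<Longrightarrow> \<rho>2 g \<in> carrier_mat m m" and m2: "\<And>g h. g \<in> S \<Longrightarrow> h \<in> S \<Longrightarrow> \<rho>2 (g \<otimes> h) = \<rho>2 g * \<rho>2 h"
    using rep2 unfolding is_rep_def by auto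
  have iS: "\<And>a. a \<in> S \<Longrightarrow> inv a \<in> S" using S by (simp add: subgroup.m_inv_closed)
  have mS: "\<And>a c. a \<in> S \<Longrightarrow> c \<in> S \<Longrightarrow> a \<otimes> c \<in> S" using S by (simp add: subgroup.m_closed)
  have sub: "\<And>a. a \<in> S \<Longrightarrow> a \<in> carrier G" using S subgroup.subset by blast
  have cf: "\<forall>a\<in>S. \<rho>1 a * Xm * \<rho>2 (inv a) \<in> carrier_mat k m"
    using c1 c2 Xm iS by (meson mult_carrier_mat)
  have "\<rho>1 b * msum k m S (\<lambda>a. \<rho>1 a * Xm * \<rho>2 (inv a)) = msum k m S (\<lambda>a. \<rho>1 b * (\<rho>1 a * Xm * \<rho>2 (inv a)))"
    by (rule msum_mult_left[OF c1[OF b] cf])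
  also have "\<dots> = msum k m S (\<lambda>a. \<rho>1 (b \<otimes> a) * Xm * \<rho>2 (inv a))"
  proof (rule msum_cong)
    fix a assume a: "a \<in> S"
    have "\<rho>1 b * (\<rho>1 a * Xm * \<rho>2 (inv a)) = (\<rho>1 b * \<rho>1 a) * Xm * \<rho>2 (inv a)"
      by (rule assoc4a[OF c1[OF b] c1[OF a] Xm c2[OF iS[OF a]]])
    then show "\<rho>1 b * (\<rho>1 a * Xm * \<rho>2 (inv a)) = \<rho>1 (b \<otimes> a) * Xm * \<rho>2 (inv a)"
      using m1[OF b a] by simp
  qed
  also have "\<dots> = msum k m S (\<lambda>a. \<rho>1 (b \<otimes> (inv b \<otimes> a)) * Xm * \<rho>2 (inv (inv b \<otimes> a)))"
    by (rule msum_reindex[OF subgroup_left_bij[OF S b]])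
  also have "\<dots> = msum k m S (\<lambda>a. \<rho>1 a * Xm * \<rho>2 (inv a) * \<rho>2 b)"
  proof (rule msum_cong)
    fix a assume a: "a \<in> S"
    have ac: "a \<in> carrier G" "b \<in> carrier G" using a b sub by auto
    have e1: "b \<otimes> (inv b \<otimes> a) = a" using ac by (simp add: cancel_l1)
    have e2: "inv (inv b \<otimes> a) = inv a \<otimes> b" using ac by (simp add: inv_mult_group)
    have e3: "\<rho>2 (inv a \<otimes> b) = \<rho>2 (inv a) * \<rho>2 b" using m2[OF iS[OF a] b] .
    have e4: "\<rho>1 a * Xm * (\<rho>2 (inv a) * \<rho>2 b) = \<rho>1 a * Xm * \<rho>2 (inv a) * \<rho>2 b"
      by (rule assoc4b[OF c1[OF a] Xm c2[OF iS[OF a]] c2[OF b]])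
    show "\<rho>1 (b \<otimes> (inv b \<otimes> a)) * Xm * \<rho>2 (inv (inv b \<otimes> a)) = \<rho>1 a * Xm * \<rho>2 (inv a) * \<rho>2 b"
      unfolding e1 e2 e3 e4 ..
  qed
  also have "\<dots> = msum k m S (\<lambda>a. \<rho>1 a * Xm * \<rho>2 (inv a)) * \<rho>2 b"
    by (rule msum_mult_right[OF c2[OF b] cf, symmetric])
  finally show ?thesis .
qed


lemma intertwine_entry:
  assumes S: "subgroup S G" and rep1: "is_rep G S k \<rho>1" and rep2: "is_rep G S m \<rho>2"
    and ijpq: "i < k" "j < m" "p < k" "q < m"
  shows "msum k m S (\<lambda>a. \<rho>1 a * mat k m (\<lambda>(r,s). if r = i \<and> s = j then 1 else 0) * \<rho>2 (inv a)) $$ (p,q)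
       = (\<Sum>a\<in>S. \<rho>1 a $$ (p,i) * \<rho>2 (inv a) $$ (j,q))"
proof -
  have c1: "\<And>g. g \<in> S \<Longrightarrow> \<rho>1 g \<in> carrier_mat k k" using rep1 unfolding is_rep_def by auto
  have c2: "\<And>g. g \<in> S \<Longrightarrow> \<rho>2 g \<in> carrier_mat m m" using rep2 unfolding is_rep_def by auto
  have iS: "\<And>a. a \<in> S \<Longrightarrow> inv a \<in> S" using S by (simp add: subgroup.m_inv_closed)
  have "msum k m S (\<lambda>a. \<rho>1 a * mat k m (\<lambda>(r,s). if r = i \<and> s = j then 1 else 0) * \<rho>2 (inv a)) $$ (p,q)
     = (\<Sum>a\<in>S. (\<rho>1 a * mat k m (\<lambda>(r,s). if r = i \<and> s = j then 1 else 0) * \<rho>2 (inv a)) $$ (p,q))"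
    using ijpq by (rule_tac msum_index) auto
  also have "\<dots> = (\<Sum>a\<in>S. \<rho>1 a $$ (p,i) * \<rho>2 (inv a) $$ (j,q))"
  proof (rule sum.cong[OF refl])
    fix a assume a: "a \<in> S"
    show "(\<rho>1 a * mat k m (\<lambda>(r,s). if r = i \<and> s = j then 1 else 0) * \<rho>2 (inv a)) $$ (p,q) = \<rho>1 a $$ (p,i) * \<rho>2 (inv a) $$ (j,q)"
      by (rule unit_mat_entry[OF c1[OF a] c2[OF iS[OF a]] ijpq])
  qed
  finally show ?thesis .
qed

lemma orth_same:
  assumes S: "subgroup S G" and fin: "finite S" and irr: "irr_rep G S m \<rho>"
    and ijpq: "p < m" "i < m" "j < m" "q < m"
  shows "(\<Sum>a\<in>S. \<rho> a $$ (p,i) * \<rho> (inv a) $$ (j,q)) = (if p = q \<and> i = j then of_nat (card S) / of_nat m else 0)"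
proof -
  have rep: "is_rep G S m \<rho>" and m: "m > 0" using irr unfolding irr_rep_def by auto
  have c: "\<And>g. g \<in> S \<Longrightarrow> \<rho> g \<in> carrier_mat m m" and mu: "\<And>g h. g \<in> S \<Longrightarrow> h \<in> S \<Longrightarrow> \<rho> (g \<otimes> h) = \<rho> g * \<rho> h"
    and one: "\<rho> \<one> = 1\<^sub>m m" using rep unfolding is_rep_def by auto
  have iS: "\<And>a. a \<in> S \<Longrightarrow> inv a \<in> S" using S by (simp add: subgroup.m_inv_closed)
  have sub: "\<And>a. a \<in> S \<Longrightarrow> a \<in> carrier G" using S subgroup.subset by blast
  define E where "E = mat m m (\<lambda>(r,s). if r = i \<and> s = j then (1::complex) else 0)"
  have E: "E \<in> carrier_mat m m" unfolding E_def by auto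
  define A where "A = msum m m S (\<lambda>a. \<rho> a * E * \<rho> (inv a))"
  have A: "A \<in> carrier_mat m m" unfolding A_def by simp
  have comm: "\<forall>g\<in>S. A * \<rho> g = \<rho> g * A"
    using intertwine[OF S rep rep E] unfolding A_def by auto
  obtain cc where cc: "A = cc \<cdot>\<^sub>m 1\<^sub>m m" using schur2[OF irr A comm] by auto
  have trE: "mat_trace E = (if i = j then 1 else 0)"
    unfolding mat_trace_def E_def using ijpq by (simp add: sum.delta'[of "{..<m}"] cong: if_cong)
  have "mat_trace A = (\<Sum>a\<in>S. mat_trace (\<rho> a * E * \<rho> (inv a)))"
    unfolding A_def using c E iS by (intro msum_trace) (auto intro!: mult_carrier_mat)
  also have "\<dots> = (\<Sum>a\<in>S. mat_trace E)"
  proof (rule sum.cong[OF refl])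
    fix a assume a: "a \<in> S"
    have "mat_trace (\<rho> a * E * \<rho> (inv a)) = mat_trace (\<rho> (inv a) * (\<rho> a * E))"
      using c[OF a] c[OF iS[OF a]] E by (intro mat_trace_comm[of _ m m]) auto
    also have "\<rho> (inv a) * (\<rho> a * E) = (\<rho> (inv a) * \<rho> a) * E"
      using c[OF a] c[OF iS[OF a]] E by (intro assoc_mult_mat[symmetric]) auto
    also have "\<rho> (inv a) * \<rho> a = 1\<^sub>m m" using mu[OF iS[OF a] a] one sub[OF a] by simp
    finally show "mat_trace (\<rho> a * E * \<rho> (inv a)) = mat_trace E" using E by simp
  qed
  also have "\<dots> = of_nat (card S) * (if i = j then 1 else 0)" using trE by simp
  finally have trA: "mat_trace A = of_nat (card S) * (if i = j then 1 else 0)" .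
  have "mat_trace A = cc * of_nat m" unfolding cc mat_trace_def by simp
  then have ccv: "cc = of_nat (card S) * (if i = j then 1 else 0) / of_nat m" using trA m by (simp add: field_simps)
  have "A $$ (p,q) = (\<Sum>a\<in>S. \<rho> a $$ (p,i) * \<rho> (inv a) $$ (j,q))"
    unfolding A_def E_def by (rule intertwine_entry[OF S rep rep]) (use ijpq in auto)
  moreover have "A $$ (p,q) = cc * (if p = q then 1 else 0)" unfolding cc using ijpq by simp
  ultimately show ?thesis using ccv by auto
qed

lemma orth_diff:
  assumes S: "subgroup S G" and irr1: "irr_rep G S k \<rho>1" and irr2: "irr_rep G S m \<rho>2"
    and ne: "\<exists>g\<in>S. mat_trace (\<rho>1 g) \<noteq> mat_trace (\<rho>2 g)"
    and ijpq: "p < k" "i < k" "j < m" "q < m"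
  shows "(\<Sum>a\<in>S. \<rho>1 a $$ (p,i) * \<rho>2 (inv a) $$ (j,q)) = 0"
proof -
  have rep1: "is_rep G S k \<rho>1" using irr1 unfolding irr_rep_def by auto
  have rep2: "is_rep G S m \<rho>2" using irr2 unfolding irr_rep_def by auto
  define E where "E = mat k m (\<lambda>(r,s). if r = i \<and> s = j then (1::complex) else 0)"
  have E: "E \<in> carrier_mat k m" unfolding E_def by auto
  define A where "A = msum k m S (\<lambda>a. \<rho>1 a * E * \<rho>2 (inv a))"
  have A: "A \<in> carrier_mat k m" unfolding A_def by simp
  have comm: "\<forall>g\<in>S. \<rho>1 g * A = A * \<rho>2 g"
    using intertwine[OF S rep1 rep2 E] unfolding A_def by auto
  have "A = 0\<^sub>m k m" using schur1[OF irr1 irr2 A comm] ne by auto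
  moreover have "A $$ (p,q) = (\<Sum>a\<in>S. \<rho>1 a $$ (p,i) * \<rho>2 (inv a) $$ (j,q))"
    unfolding A_def E_def by (rule intertwine_entry[OF S rep1 rep2]) (use ijpq in auto)
  ultimately show ?thesis using ijpq by simp
qed


lemma trace_prod_expand:
  assumes S: "subgroup S G" and rep1: "is_rep G S k \<rho>1" and rep2: "is_rep G S m \<rho>2" and cS: "c \<in> S"
  shows "(\<Sum>a\<in>S. mat_trace (\<rho>1 a) * mat_trace (\<rho>2 (inv a \<otimes> c)))
       = (\<Sum>p<k. \<Sum>j<m. \<Sum>l<m. \<rho>2 c $$ (l,j) * (\<Sum>a\<in>S. \<rho>1 a $$ (p,p) * \<rho>2 (inv a) $$ (j,l)))"
proof -
  have c1: "\<And>g. g \<in> S \<Longrightarrow> \<rho>1 g \<in> carrier_mat k k" using rep1 unfolding is_rep_def by auto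
  have c2: "\<And>g. g \<in> S \<Longrightarrow> \<rho>2 g \<in> carrier_mat m m" and m2: "\<And>g h. g \<in> S \<Longrightarrow> h \<in> S \<Longrightarrow> \<rho>2 (g \<otimes> h) = \<rho>2 g * \<rho>2 h"
    using rep2 unfolding is_rep_def by auto
  have iS: "\<And>a. a \<in> S \<Longrightarrow> inv a \<in> S" using S by (simp add: subgroup.m_inv_closed)
  have tm: "mat_trace (\<rho>1 a) * mat_trace (\<rho>2 (inv a \<otimes> c))
      = (\<Sum>p<k. \<Sum>j<m. \<Sum>l<m. \<rho>2 c $$ (l,j) * (\<rho>1 a $$ (p,p) * \<rho>2 (inv a) $$ (j,l)))" if a: "a \<in> S" for a
  proof -
    have t1: "mat_trace (\<rho>1 a) = (\<Sum>p<k. \<rho>1 a $$ (p,p))" unfolding mat_trace_def using c1[OF a] by simp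
    have "mat_trace (\<rho>2 (inv a \<otimes> c)) = (\<Sum>j<m. (\<rho>2 (inv a) * \<rho>2 c) $$ (j,j))"
      unfolding mat_trace_def m2[OF iS[OF a] cS] using c2[OF cS] c2[OF iS[OF a]] by simp
    also have "\<dots> = (\<Sum>j<m. \<Sum>l<m. \<rho>2 (inv a) $$ (j,l) * \<rho>2 c $$ (l,j))"
      by (intro sum.cong refl mult_entry[OF c2[OF iS[OF a]] c2[OF cS]]) auto
    finally have t2: "mat_trace (\<rho>2 (inv a \<otimes> c)) = (\<Sum>j<m. \<Sum>l<m. \<rho>2 (inv a) $$ (j,l) * \<rho>2 c $$ (l,j))" .
    have "mat_trace (\<rho>1 a) * mat_trace (\<rho>2 (inv a \<otimes> c))
       = (\<Sum>p<k. \<rho>1 a $$ (p,p)) * (\<Sum>j<m. \<Sum>l<m. \<rho>2 (inv a) $$ (j,l) * \<rho>2 c $$ (l,j))"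
      by (simp only: t1 t2)
    also have "\<dots> = (\<Sum>p<k. \<Sum>j<m. \<rho>1 a $$ (p,p) * (\<Sum>l<m. \<rho>2 (inv a) $$ (j,l) * \<rho>2 c $$ (l,j)))"
      by (rule sum_product)
    also have "\<dots> = (\<Sum>p<k. \<Sum>j<m. \<Sum>l<m. \<rho>2 c $$ (l,j) * (\<rho>1 a $$ (p,p) * \<rho>2 (inv a) $$ (j,l)))"
      by (intro sum.cong refl) (simp add: sum_distrib_left algebra_simps)
    finally show ?thesis .
  qed
  have "(\<Sum>a\<in>S. mat_trace (\<rho>1 a) * mat_trace (\<rho>2 (inv a \<otimes> c)))
      = (\<Sum>a\<in>S. \<Sum>p<k. \<Sum>j<m. \<Sum>l<m. \<rho>2 c $$ (l,j) * (\<rho>1 a $$ (p,p) * \<rho>2 (inv a) $$ (j,l)))"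
    using tm by (rule sum.cong[OF refl])
  also have "\<dots> = (\<Sum>p<k. \<Sum>a\<in>S. \<Sum>j<m. \<Sum>l<m. \<rho>2 c $$ (l,j) * (\<rho>1 a $$ (p,p) * \<rho>2 (inv a) $$ (j,l)))"
    by (rule sum.swap)
  also have "\<dots> = (\<Sum>p<k. \<Sum>j<m. \<Sum>a\<in>S. \<Sum>l<m. \<rho>2 c $$ (l,j) * (\<rho>1 a $$ (p,p) * \<rho>2 (inv a) $$ (j,l)))"
    by (rule sum.cong[OF refl], rule sum.swap)
  also have "\<dots> = (\<Sum>p<k. \<Sum>j<m. \<Sum>l<m. \<Sum>a\<in>S. \<rho>2 c $$ (l,j) * (\<rho>1 a $$ (p,p) * \<rho>2 (inv a) $$ (j,l)))"
    by (rule sum.cong[OF refl], rule sum.cong[OF refl], rule sum.swap)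
  also have "\<dots> = (\<Sum>p<k. \<Sum>j<m. \<Sum>l<m. \<rho>2 c $$ (l,j) * (\<Sum>a\<in>S. \<rho>1 a $$ (p,p) * \<rho>2 (inv a) $$ (j,l)))"
    by (simp add: sum_distrib_left)
  finally show ?thesis .
qed

lemma GO:
  assumes S: "subgroup S G" and fin: "finite S" and irr1: "irr_rep G S k \<rho>1" and irr2: "irr_rep G S m \<rho>2"
    and cS: "c \<in> S"
  shows "(\<Sum>a\<in>S. mat_trace (\<rho>1 a) * mat_trace (\<rho>2 (inv a \<otimes> c)))
       = (if \<forall>g\<in>S. mat_trace (\<rho>1 g) = mat_trace (\<rho>2 g) then of_nat (card S) / of_nat m * mat_trace (\<rho>2 c) else 0)"
proof -
  have rep1: "is_rep G S k \<rho>1" using irr1 unfolding irr_rep_def by auto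
  have rep2: "is_rep G S m \<rho>2" using irr2 unfolding irr_rep_def by auto
  show ?thesis
  proof (cases "\<forall>g\<in>S. mat_trace (\<rho>1 g) = mat_trace (\<rho>2 g)")
    case True
    have "(\<Sum>a\<in>S. mat_trace (\<rho>1 a) * mat_trace (\<rho>2 (inv a \<otimes> c)))
        = (\<Sum>a\<in>S. mat_trace (\<rho>2 a) * mat_trace (\<rho>2 (inv a \<otimes> c)))"
      using True by (intro sum.cong refl) auto
    also have "\<dots> = (\<Sum>p<m. \<Sum>j<m. \<Sum>l<m. \<rho>2 c $$ (l,j) * (\<Sum>a\<in>S. \<rho>2 a $$ (p,p) * \<rho>2 (inv a) $$ (j,l)))"
      by (rule trace_prod_expand[OF S rep2 rep2 cS])
    also have "\<dots> = (\<Sum>p<m. \<Sum>j<m. \<Sum>l<m. \<rho>2 c $$ (l,j) * (if p = l \<and> p = j then of_nat (card S) / of_nat m else 0))"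
      by (intro sum.cong refl) (simp add: orth_same[OF S fin irr2])
    also have "\<dots> = (\<Sum>p<m. \<Sum>j<m. if j = p then \<rho>2 c $$ (p,p) * (of_nat (card S) / of_nat m) else 0)"
    proof (intro sum.cong refl)
      fix p j assume "p \<in> {..<m}" "j \<in> {..<m}"
      show "(\<Sum>l<m. \<rho>2 c $$ (l,j) * (if p = l \<and> p = j then of_nat (card S) / of_nat m else 0))
          = (if j = p then \<rho>2 c $$ (p,p) * (of_nat (card S) / of_nat m) else 0)"
        using \<open>p \<in> {..<m}\<close> by (cases "j = p") (auto simp: if_distrib cong: if_cong)
    qed
    also have "\<dots> = (\<Sum>p<m. \<rho>2 c $$ (p,p) * (of_nat (card S) / of_nat m))"
      by (intro sum.cong refl) simp
    also have "\<dots> = of_nat (card S) / of_nat m * mat_trace (\<rho>2 c)"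
      unfolding mat_trace_def using rep2 cS unfolding is_rep_def by (auto simp: sum_distrib_left mult.commute)
    finally show ?thesis unfolding if_P[OF True] .
  next
    case False
    have "(\<Sum>a\<in>S. mat_trace (\<rho>1 a) * mat_trace (\<rho>2 (inv a \<otimes> c)))
       = (\<Sum>p<k. \<Sum>j<m. \<Sum>l<m. \<rho>2 c $$ (l,j) * (\<Sum>a\<in>S. \<rho>1 a $$ (p,p) * \<rho>2 (inv a) $$ (j,l)))"
      by (rule trace_prod_expand[OF S rep1 rep2 cS])
    also have "\<dots> = 0"
      using orth_diff[OF S irr1 irr2] False by (intro sum.neutral ballI) auto
    finally show ?thesis unfolding if_not_P[OF False] .
  qed
qed


lemma class_fun:
  assumes L: "subgroup L G" and rep: "is_rep G L n \<rho>" and g: "g \<in> L" and h: "h \<in> L"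
  shows "mat_trace (\<rho> (g \<otimes> h \<otimes> inv g)) = mat_trace (\<rho> h)"
proof -
  interpret L: subgroup L G by fact
  have c: "\<And>a. a \<in> L \<Longrightarrow> \<rho> a \<in> carrier_mat n n" and mu: "\<And>a b. a \<in> L \<Longrightarrow> b \<in> L \<Longrightarrow> \<rho> (a \<otimes> b) = \<rho> a * \<rho> b"
    and one: "\<rho> \<one> = 1\<^sub>m n" using rep unfolding is_rep_def by auto
  have ig: "inv g \<in> L" using g by simp
  have "\<rho> (g \<otimes> h \<otimes> inv g) = (\<rho> g * \<rho> h) * \<rho> (inv g)" using g h ig by (simp add: mu)
  then have "mat_trace (\<rho> (g \<otimes> h \<otimes> inv g)) = mat_trace (\<rho> (inv g) * (\<rho> g * \<rho> h))"
    using c[OF g] c[OF h] c[OF ig] by (simp only:) (rule mat_trace_comm[of _ n n], auto)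
  also have "\<rho> (inv g) * (\<rho> g * \<rho> h) = (\<rho> (inv g) * \<rho> g) * \<rho> h"
    using c g h ig by (intro assoc_mult_mat[symmetric]) auto
  also have "\<rho> (inv g) * \<rho> g = 1\<^sub>m n" using mu[OF ig g] one g L.subset by auto
  finally show ?thesis using c[OF h] by simp
qed

lemma conj_irr:
  assumes N: "S \<lhd> G" and x: "x \<in> carrier G" and irr: "irr_rep G S m \<rho>"
  shows "irr_rep G S m (\<lambda>s. \<rho> (inv x \<otimes> s \<otimes> x))"
proof -
  interpret N: normal S G by fact
  have rep: "is_rep G S m \<rho>" and m: "m > 0"
    and irrW: "\<And>W. is_subspace m W \<Longrightarrow> (\<forall>g\<in>S. \<forall>w\<in>W. \<rho> g *\<^sub>v w \<in> W) \<Longrightarrow> W = {0\<^sub>v m} \<or> W = carrier_vec m"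
    using irr unfolding irr_rep_def by auto
  have c: "\<And>a. a \<in> S \<Longrightarrow> \<rho> a \<in> carrier_mat m m" and mu: "\<And>a b. a \<in> S \<Longrightarrow> b \<in> S \<Longrightarrow> \<rho> (a \<otimes> b) = \<rho> a * \<rho> b"
    and one: "\<rho> \<one> = 1\<^sub>m m" using rep unfolding is_rep_def by auto
  have cl: "\<And>s. s \<in> S \<Longrightarrow> inv x \<otimes> s \<otimes> x \<in> S" using N.inv_op_closed1 x by auto
  have sc: "\<And>s. s \<in> S \<Longrightarrow> s \<in> carrier G" using N.subset by auto
  have rep': "is_rep G S m (\<lambda>s. \<rho> (inv x \<otimes> s \<otimes> x))"
    unfolding is_rep_def
  proof (intro conjI ballI)
    fix g assume "g \<in> S" then show "\<rho> (inv x \<otimes> g \<otimes> x) \<in> carrier_mat m m" using c cl by auto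
  next
    show "\<rho> (inv x \<otimes> \<one> \<otimes> x) = 1\<^sub>m m" using one x by simp
  next
    fix g h assume g: "g \<in> S" and h: "h \<in> S"
    have "inv x \<otimes> (g \<otimes> h) \<otimes> x = (inv x \<otimes> g \<otimes> x) \<otimes> (inv x \<otimes> h \<otimes> x)"
      using x sc[OF g] sc[OF h] by (simp add: m_assoc cancel_l1)
    then show "\<rho> (inv x \<otimes> (g \<otimes> h) \<otimes> x) = \<rho> (inv x \<otimes> g \<otimes> x) * \<rho> (inv x \<otimes> h \<otimes> x)"
      using mu cl g h by simp
  qed
  show ?thesis unfolding irr_rep_def
  proof (intro conjI allI impI rep' m)
    fix W assume W: "is_subspace m W \<and> (\<forall>g\<in>S. \<forall>w\<in>W. \<rho> (inv x \<otimes> g \<otimes> x) *\<^sub>v w \<in> W)"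
    have "\<forall>g\<in>S. \<forall>w\<in>W. \<rho> g *\<^sub>v w \<in> W"
    proof (intro ballI)
      fix g w assume g: "g \<in> S" and w: "w \<in> W"
      have g': "x \<otimes> g \<otimes> inv x \<in> S" using N.inv_op_closed2 x g by auto
      have "inv x \<otimes> (x \<otimes> g \<otimes> inv x) \<otimes> x = g" using x sc[OF g] by (simp add: m_assoc cancel_l2)
      then show "\<rho> g *\<^sub>v w \<in> W" using W g' w by metis
    qed
    then show "W = {0\<^sub>v m} \<or> W = carrier_vec m" using irrW W by auto
  qed
qed

lemma conv_coef:
  assumes S: "subgroup S G" and fin: "finite S" and irr1: "irr_rep G S m1 \<rho>1" and irr2: "irr_rep G S m \<rho>2"
    and cS: "c \<in> S" and ne: "S \<noteq> {}"
  shows "(\<Sum>a\<in>S. (of_nat m / of_nat (card S) * cnj (mat_trace (\<rho>1 a))) * (of_nat m / of_nat (card S) * cnj (mat_trace (\<rho>2 (inv a \<otimes> c)))))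
     = (if \<forall>g\<in>S. mat_trace (\<rho>1 g) = mat_trace (\<rho>2 g) then of_nat m / of_nat (card S) * cnj (mat_trace (\<rho>2 c)) else 0)"
proof -
  have m: "m > 0" using irr2 unfolding irr_rep_def by auto
  have cs: "card S > 0" using fin ne by (simp add: card_gt_0_iff)
  let ?k = "of_nat m / of_nat (card S) :: complex"
  have "(\<Sum>a\<in>S. (?k * cnj (mat_trace (\<rho>1 a))) * (?k * cnj (mat_trace (\<rho>2 (inv a \<otimes> c)))))
      = ?k * ?k * cnj (\<Sum>a\<in>S. mat_trace (\<rho>1 a) * mat_trace (\<rho>2 (inv a \<otimes> c)))"
    by (simp add: sum_distrib_left algebra_simps)
  also have "\<dots> = ?k * ?k * cnj (if \<forall>g\<in>S. mat_trace (\<rho>1 g) = mat_trace (\<rho>2 g) then of_nat (card S) / of_nat m * mat_trace (\<rho>2 c) else 0)"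
    using GO[OF S fin irr1 irr2 cS] by simp
  also have "\<dots> = (if \<forall>g\<in>S. mat_trace (\<rho>1 g) = mat_trace (\<rho>2 g) then ?k * cnj (mat_trace (\<rho>2 c)) else 0)"
    using m cs by (auto simp: field_simps)
  finally show ?thesis .
qed


lemma subgroup_conj_bij:
  assumes "subgroup H G" "g \<in> H"
  shows "bij_betw (\<lambda>s. inv g \<otimes> s \<otimes> g) H H"
proof (rule bij_betwI[where g = "\<lambda>s. g \<otimes> s \<otimes> inv g"])
  interpret subgroup H G by fact
  show "(\<lambda>s. inv g \<otimes> s \<otimes> g) \<in> H \<rightarrow> H" using assms by auto
  show "(\<lambda>s. g \<otimes> s \<otimes> inv g) \<in> H \<rightarrow> H" using assms by auto
  fix x assume "x \<in> H"
  then have x: "x \<in> carrier G" using subset by auto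
  have t: "g \<in> carrier G" using assms subset by auto
  show "g \<otimes> (inv g \<otimes> x \<otimes> g) \<otimes> inv g = x" using x t
    by (simp add: m_assoc cancel_l1 cancel_l2)
  show "inv g \<otimes> (g \<otimes> x \<otimes> inv g) \<otimes> g = x" using x t
    by (simp add: m_assoc cancel_l1 cancel_l2)
qed

lemma stab_subgroup:
  assumes H: "subgroup H G" and N: "S \<lhd> G"
  shows "subgroup (stab G H S lam) G"
proof -
  interpret N: normal S G by fact
  interpret Hs: subgroup H G by fact
  have img: "\<And>g. g \<in> carrier G \<Longrightarrow> (\<lambda>h. inv g \<otimes> h \<otimes> g) ` S = S"
    using normal_conj_bij[OF N] bij_betw_imp_surj_on by blast
  have mem: "\<And>g. g \<in> stab G H S lam \<longleftrightarrow> g \<in> H \<and> (\<forall>h\<in>S. lam (g \<otimes> h \<otimes> inv g) = lam h)"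
    unfolding stab_def using img Hs.subset by auto
  have sc: "\<And>s. s \<in> S \<Longrightarrow> s \<in> carrier G" using N.subset by auto
  show ?thesis
  proof (rule subgroupI)
    show "stab G H S lam \<subseteq> carrier G" using mem Hs.subset by auto
    have "\<one> \<in> stab G H S lam" using mem sc by auto
    then show "stab G H S lam \<noteq> {}" by auto
  next
    fix a assume a: "a \<in> stab G H S lam"
    then have aH: "a \<in> H" and al: "\<forall>h\<in>S. lam (a \<otimes> h \<otimes> inv a) = lam h" using mem by auto
    have ac: "a \<in> carrier G" using aH Hs.subset by auto
    have "lam (inv a \<otimes> h \<otimes> inv (inv a)) = lam h" if h: "h \<in> S" for h
    proof -
      have h': "inv a \<otimes> h \<otimes> a \<in> S" using N.inv_op_closed1 ac h by auto
      have "a \<otimes> (inv a \<otimes> h \<otimes> a) \<otimes> inv a = h" using ac sc[OF h] by (simp add: m_assoc cancel_l1)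
      then have "lam h = lam (inv a \<otimes> h \<otimes> a)" using al h' by metis
      then show ?thesis using ac by simp
    qed
    then show "inv a \<in> stab G H S lam" using mem aH by auto
  next
    fix a b assume a: "a \<in> stab G H S lam" and b: "b \<in> stab G H S lam"
    then have aH: "a \<in> H" and al: "\<forall>h\<in>S. lam (a \<otimes> h \<otimes> inv a) = lam h"
      and bH: "b \<in> H" and bl: "\<forall>h\<in>S. lam (b \<otimes> h \<otimes> inv b) = lam h" using mem by auto
    have ac: "a \<in> carrier G" "b \<in> carrier G" using aH bH Hs.subset by auto
    have "lam (a \<otimes> b \<otimes> h \<otimes> inv (a \<otimes> b)) = lam h" if h: "h \<in> S" for h
    proof -
      have h': "b \<otimes> h \<otimes> inv b \<in> S" using N.inv_op_closed2 ac h by auto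
      have "a \<otimes> b \<otimes> h \<otimes> inv (a \<otimes> b) = a \<otimes> (b \<otimes> h \<otimes> inv b) \<otimes> inv a"
        using ac sc[OF h] by (simp add: m_assoc inv_mult_group)
      then show ?thesis using al bl h h' by simp
    qed
    then show "a \<otimes> b \<in> stab G H S lam" using mem aH bH by auto
  qed
qed

end

lemma proj_cong: "(\<And>s. s \<in> S \<Longrightarrow> c1 s = c2 s) \<Longrightarrow> proj S d \<pi> c1 = proj S d \<pi> c2"
  unfolding proj_def by (intro cong_mat refl) (auto intro!: sum.cong)

lemma proj_zero: "(\<And>s. s \<in> S \<Longrightarrow> c s = 0) \<Longrightarrow> proj S d \<pi> c = 0\<^sub>m d d"
  unfolding proj_def by (intro eq_matI) auto

lemma proj_trace: "\<forall>s\<in>S. \<pi> s \<in> carrier_mat d d \<Longrightarrow> mat_trace (proj S d \<pi> c) = (\<Sum>s\<in>S. c s * mat_trace (\<pi> s))"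
proof -
  assume a: "\<forall>s\<in>S. \<pi> s \<in> carrier_mat d d"
  have "mat_trace (1\<^sub>m d * proj S d \<pi> c) = (\<Sum>s\<in>S. c s * mat_trace (1\<^sub>m d * \<pi> s))"
    using a by (intro trace_mult_proj) auto
  then show ?thesis using a by (auto intro!: sum.cong)
qed


context group
begin

lemma main_lemma:
  assumes fin: "finite (carrier G)"
    and Hsg: "subgroup H G" and N: "S \<lhd> G" and SH: "S \<subseteq> H"
    and thI: "\<theta> \<in> Irr G H" and lI: "lam \<in> Irr G S"
    and tlI: "theta_lam \<in> Irr G (stab G H S lam)" and la: "lies_above S theta_lam lam"
    and ind: "ind G (stab G H S lam) H theta_lam = \<theta>"
    and ext: "extends_to G (stab G (carrier G) H \<theta>) H \<theta>"
  shows "extends_to G (stab G (carrier G) H \<theta> \<inter> stab G (carrier G) S lam) (stab G H S lam) theta_lam"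
proof -
  interpret N: normal S G by fact
  interpret Hs: subgroup H G by fact
  define K where "K = stab G H S lam"
  define E where "E = stab G (carrier G) H \<theta>"
  define T where "T = E \<inter> stab G (carrier G) S lam"
  obtain m \<rho> where irrl: "irr_rep G S m \<rho>" and lam: "lam = char_of S \<rho>" using lI unfolding Irr_def by auto
  obtain n\<tau> \<tau> where irrt: "irr_rep G K n\<tau> \<tau>" and tl: "theta_lam = char_of K \<tau>" using tlI unfolding Irr_def K_def by auto
  obtain n\<theta> \<rho>\<theta> where irrth: "irr_rep G H n\<theta> \<rho>\<theta>" and th: "\<theta> = char_of H \<rho>\<theta>" using thI unfolding Irr_def by auto
  obtain \<chi> where chi: "is_character G E \<chi>" and reschi: "res H \<chi> = \<theta>" using ext unfolding extends_to_def E_def by auto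
  obtain d \<sigma> where rep\<sigma>: "is_rep G E d \<sigma>" and chiv: "\<chi> = char_of E \<sigma>" using chi unfolding is_character_def by auto
  have Ssg: "subgroup S G" by (rule N.subgroup_axioms)
  have finS: "finite S" using finite_subset[OF N.subset fin] .
  have Sne: "S \<noteq> {}" using subgroup.one_closed[OF Ssg] by blast
  have cardS: "card S > 0" using finS Sne by (simp add: card_gt_0_iff)
  have sc: "\<And>s. s \<in> S \<Longrightarrow> s \<in> carrier G" using N.subset by auto
  have hc: "\<And>s. s \<in> H \<Longrightarrow> s \<in> carrier G" using Hs.subset by auto
  have imgS: "\<And>g. g \<in> carrier G \<Longrightarrow> (\<lambda>h. inv g \<otimes> h \<otimes> g) ` S = S"
    using normal_conj_bij[OF N] bij_betw_imp_surj_on by blast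
  have imgH: "\<And>g. g \<in> H \<Longrightarrow> (\<lambda>h. inv g \<otimes> h \<otimes> g) ` H = H"
    using subgroup_conj_bij[OF Hsg] bij_betw_imp_surj_on by blast
  have rep\<rho>: "is_rep G S m \<rho>" and m0: "m > 0" using irrl unfolding irr_rep_def by auto
  have rep\<tau>: "is_rep G K n\<tau> \<tau>" and n\<tau>0: "n\<tau> > 0" using irrt unfolding irr_rep_def by auto
  have rep\<theta>: "is_rep G H n\<theta> \<rho>\<theta>" using irrth unfolding irr_rep_def by auto
  have lamS: "\<And>s. s \<in> S \<Longrightarrow> lam s = mat_trace (\<rho> s)" unfolding lam char_of_def by simp
  have Kmem: "g \<in> K \<longleftrightarrow> g \<in> H \<and> (\<forall>h\<in>S. lam (g \<otimes> h \<otimes> inv g) = lam h)" for g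
  proof -
    have "g \<in> K \<longleftrightarrow> g \<in> H \<and> (\<lambda>h. inv g \<otimes> h \<otimes> g) ` S = S \<and> (\<forall>h\<in>S. lam (g \<otimes> h \<otimes> inv g) = lam h)"
      unfolding K_def stab_def by blast
    then show ?thesis using imgS hc by blast
  qed
  have Ksg: "subgroup K G" unfolding K_def by (rule stab_subgroup[OF Hsg N])
  interpret Ks: subgroup K G by fact
  have KH: "K \<subseteq> H" using Kmem by auto
  have SK: "S \<subseteq> K"
  proof
    fix s assume s: "s \<in> S"
    have "lam (s \<otimes> h \<otimes> inv s) = lam h" if h: "h \<in> S" for h
      using lamS class_fun[OF Ssg rep\<rho> s h] s h N.inv_op_closed2 sc by auto
    then show "s \<in> K" using Kmem s SH by auto
  qed
  have HE: "H \<subseteq> E"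
  proof
    fix h assume h: "h \<in> H"
    have "\<theta> (h \<otimes> x \<otimes> inv h) = \<theta> x" if x: "x \<in> H" for x
      using class_fun[OF Hsg rep\<theta> h x] h x unfolding th char_of_def by auto
    moreover have "(\<lambda>x. inv h \<otimes> x \<otimes> h) ` H = H" using imgH h by blast
    ultimately show "h \<in> E" unfolding E_def stab_def using h hc by blast
  qed
  have KT: "K \<subseteq> T"
  proof
    fix k assume k: "k \<in> K"
    then have "k \<in> H" "\<forall>h\<in>S. lam (k \<otimes> h \<otimes> inv k) = lam h" using Kmem by auto
    moreover have "(\<lambda>x. inv k \<otimes> x \<otimes> k) ` S = S" using imgS hc \<open>k \<in> H\<close> by blast
    ultimately have "k \<in> stab G (carrier G) S lam" unfolding stab_def using hc by blast
    then show "k \<in> T" using k KH HE unfolding T_def by auto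
  qed
  have SE: "S \<subseteq> E" using SH HE by auto
  have TE: "T \<subseteq> E" unfolding T_def by auto
  have Tl: "\<And>t s. t \<in> T \<Longrightarrow> s \<in> S \<Longrightarrow> lam (t \<otimes> s \<otimes> inv t) = lam s"
    unfolding T_def stab_def by auto
  have Tc: "\<And>t. t \<in> T \<Longrightarrow> t \<in> carrier G" unfolding T_def stab_def by auto
  have \<sigma>c: "\<And>g. g \<in> E \<Longrightarrow> \<sigma> g \<in> carrier_mat d d" and \<sigma>m: "\<And>g h. g \<in> E \<Longrightarrow> h \<in> E \<Longrightarrow> \<sigma> (g \<otimes> h) = \<sigma> g * \<sigma> h"
    using rep\<sigma> unfolding is_rep_def by auto
  have \<tau>c: "\<And>g. g \<in> K \<Longrightarrow> \<tau> g \<in> carrier_mat n\<tau> n\<tau>" and \<tau>m: "\<And>g h. g \<in> K \<Longrightarrow> h \<in> K \<Longrightarrow> \<tau> (g \<otimes> h) = \<tau> g * \<tau> h"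
    using rep\<tau> unfolding is_rep_def by auto
  define cl where "cl = (\<lambda>s. of_nat m / of_nat (card S) * cnj (lam s))"
  have conv_l: "(\<Sum>a\<in>S. cl a * cl (inv a \<otimes> c)) = cl c" if c: "c \<in> S" for c
  proof -
    have "(\<Sum>a\<in>S. cl a * cl (inv a \<otimes> c)) = (\<Sum>a\<in>S. (of_nat m / of_nat (card S) * cnj (mat_trace (\<rho> a))) * (of_nat m / of_nat (card S) * cnj (mat_trace (\<rho> (inv a \<otimes> c)))))"
      using c lamS unfolding cl_def by (intro sum.cong refl) (auto simp: N.m_inv_closed)
    also have "\<dots> = of_nat m / of_nat (card S) * cnj (mat_trace (\<rho> c))"
      using conv_coef[OF Ssg finS irrl irrl c Sne] by simp
    finally show ?thesis using lamS c unfolding cl_def by simp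
  qed
  define P where "P = proj S d \<sigma> cl"
  have Pc: "P \<in> carrier_mat d d" unfolding P_def by simp
  have Pidem: "P * P = P"
  proof -
    have "P * P = proj S d \<sigma> (\<lambda>c. \<Sum>a\<in>S. cl a * cl (inv a \<otimes> c))"
      unfolding P_def using \<sigma>c \<sigma>m SE by (intro proj_mult[OF Ssg finS]) auto
    also have "\<dots> = P" unfolding P_def by (rule proj_cong) (rule conv_l)
    finally show ?thesis .
  qed
  have Pcomm: "\<forall>t\<in>T. \<sigma> t * P = P * \<sigma> t"
  proof
    fix t assume t: "t \<in> T"
    show "\<sigma> t * P = P * \<sigma> t" unfolding P_def
    proof (rule proj_comm[OF N Tc[OF t]])
      show "\<forall>s\<in>S. \<sigma> s \<in> carrier_mat d d" using \<sigma>c SE by auto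
      show "\<sigma> t \<in> carrier_mat d d" using \<sigma>c TE t by auto
      show "\<forall>s\<in>S. \<sigma> (t \<otimes> s) = \<sigma> t * \<sigma> s" using \<sigma>m SE TE t by auto
      show "\<forall>s\<in>S. \<sigma> (s \<otimes> t) = \<sigma> s * \<sigma> t" using \<sigma>m SE TE t by auto
      show "\<forall>s\<in>S. cl (t \<otimes> s \<otimes> inv t) = cl s" using Tl t unfolding cl_def by auto
    qed
  qed
  have rep\<sigma>T: "is_rep G T d \<sigma>" using rep\<sigma> TE unfolding is_rep_def by auto
  obtain r \<rho>' where rep': "is_rep G T r \<rho>'" and tr': "\<forall>t\<in>T. mat_trace (\<rho>' t) = mat_trace (P * \<sigma> t)"
    using subrep[OF rep\<sigma>T Pc Pidem Pcomm] by blast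
  have \<tau>Sc: "\<forall>s\<in>S. \<tau> s \<in> carrier_mat n\<tau> n\<tau>" using \<tau>c SK by auto
  have tlK: "\<And>g. g \<in> K \<Longrightarrow> theta_lam g = mat_trace (\<tau> g)" unfolding tl char_of_def by simp
  define Pt where "Pt = proj S n\<tau> \<tau> cl"
  have Pt1: "Pt = 1\<^sub>m n\<tau>"
  proof -
    have comm: "\<forall>g\<in>K. Pt * \<tau> g = \<tau> g * Pt"
    proof
      fix g assume g: "g \<in> K"
      have gc: "g \<in> carrier G" using g Ks.subset by auto
      have "\<tau> g * Pt = Pt * \<tau> g" unfolding Pt_def
      proof (rule proj_comm[OF N gc \<tau>Sc])
        show "\<tau> g \<in> carrier_mat n\<tau> n\<tau>" using \<tau>c g by auto
        show "\<forall>s\<in>S. \<tau> (g \<otimes> s) = \<tau> g * \<tau> s" using \<tau>m SK g by auto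
        show "\<forall>s\<in>S. \<tau> (s \<otimes> g) = \<tau> s * \<tau> g" using \<tau>m SK g by auto
        show "\<forall>s\<in>S. cl (g \<otimes> s \<otimes> inv g) = cl s" using Kmem g unfolding cl_def by auto
      qed
      then show "Pt * \<tau> g = \<tau> g * Pt" by simp
    qed
    obtain cc where cc: "Pt = cc \<cdot>\<^sub>m 1\<^sub>m n\<tau>" using schur2[OF irrt _ comm] unfolding Pt_def by auto
    have idem: "Pt * Pt = Pt"
    proof -
      have "Pt * Pt = proj S n\<tau> \<tau> (\<lambda>c. \<Sum>a\<in>S. cl a * cl (inv a \<otimes> c))"
        unfolding Pt_def using \<tau>c \<tau>m SK by (intro proj_mult[OF Ssg finS]) auto
      also have "\<dots> = Pt" unfolding Pt_def by (rule proj_cong) (rule conv_l)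
      finally show ?thesis .
    qed
    have "(Pt * Pt) $$ (0,0) = cc * cc" unfolding cc using n\<tau>0 by (simp add: mult_entry[of _ n\<tau> n\<tau> _ n\<tau>])
    moreover have "Pt $$ (0,0) = cc" unfolding cc using n\<tau>0 by simp
    ultimately have cc2: "cc * cc = cc" using idem by simp
    have "mat_trace Pt = (\<Sum>s\<in>S. cl s * mat_trace (\<tau> s))" unfolding Pt_def using \<tau>Sc by (rule proj_trace)
    also have "\<dots> = of_nat m * inner_char S (res S theta_lam) lam"
      unfolding inner_char_def cl_def res_def using tlK SK
      by (simp add: sum_divide_distrib sum_distrib_left algebra_simps) (intro sum.cong refl, auto)
    finally have trPt: "mat_trace Pt = of_nat m * inner_char S (res S theta_lam) lam" .
    have "inner_char S (res S theta_lam) lam \<noteq> 0" using la unfolding lies_above_def .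
    then have "mat_trace Pt \<noteq> 0" using trPt m0 by simp
    then have "cc \<noteq> 0" unfolding cc mat_trace_def by auto
    then have "cc = 1" using cc2 by (metis mult_cancel_left2)
    then show ?thesis using cc by (auto intro!: eq_matI)
  qed
  define cmu where "cmu = (\<lambda>x s. of_nat m / of_nat (card S) * cnj (lam (inv x \<otimes> s \<otimes> x)))"
  have PmuK: "proj S n\<tau> \<tau> (cmu x) = 1\<^sub>m n\<tau>" if x: "x \<in> K" for x
  proof -
    have ix: "inv x \<in> K" using x by simp
    have xc: "x \<in> carrier G" using x Ks.subset by auto
    have "proj S n\<tau> \<tau> (cmu x) = Pt" unfolding Pt_def
    proof (rule proj_cong)
      fix s assume s: "s \<in> S"
      have "lam (inv x \<otimes> s \<otimes> inv (inv x)) = lam s" using Kmem ix s by auto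
      then show "cmu x s = cl s" unfolding cmu_def cl_def using xc by simp
    qed
    then show ?thesis using Pt1 by simp
  qed
  have Pmu0: "proj S n\<tau> \<tau> (cmu x) = 0\<^sub>m n\<tau> n\<tau>" if x: "x \<in> H" "x \<notin> K" for x
  proof -
    have xc: "x \<in> carrier G" using x hc by auto
    have irrmu: "irr_rep G S m (\<lambda>s. \<rho> (inv x \<otimes> s \<otimes> x))" by (rule conj_irr[OF N xc irrl])
    have ne: "\<not> (\<forall>g\<in>S. mat_trace (\<rho> (inv x \<otimes> g \<otimes> x)) = mat_trace (\<rho> g))"
    proof
      assume A: "\<forall>g\<in>S. mat_trace (\<rho> (inv x \<otimes> g \<otimes> x)) = mat_trace (\<rho> g)"
      have "lam (x \<otimes> h \<otimes> inv x) = lam h" if h: "h \<in> S" for h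
      proof -
        have h': "x \<otimes> h \<otimes> inv x \<in> S" using N.inv_op_closed2 xc h by auto
        have e: "inv x \<otimes> (x \<otimes> h \<otimes> inv x) \<otimes> x = h" using xc sc[OF h] by (simp add: m_assoc cancel_l2)
        have "mat_trace (\<rho> (inv x \<otimes> (x \<otimes> h \<otimes> inv x) \<otimes> x)) = mat_trace (\<rho> (x \<otimes> h \<otimes> inv x))" using A h' by blast
        then show ?thesis using e lamS h h' by simp
      qed
      then have "x \<in> K" using Kmem x by auto
      then show False using x by simp
    qed
    have "proj S n\<tau> \<tau> (cmu x) = proj S n\<tau> \<tau> (cmu x) * Pt" using Pt1 by simp
    also have "\<dots> = proj S n\<tau> \<tau> (\<lambda>c. \<Sum>a\<in>S. cmu x a * cl (inv a \<otimes> c))"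
      unfolding Pt_def using \<tau>c \<tau>m SK by (intro proj_mult[OF Ssg finS]) auto
    also have "\<dots> = 0\<^sub>m n\<tau> n\<tau>"
    proof (rule proj_zero)
      fix c assume c: "c \<in> S"
      have "(\<Sum>a\<in>S. cmu x a * cl (inv a \<otimes> c))
        = (\<Sum>a\<in>S. (of_nat m / of_nat (card S) * cnj (mat_trace (\<rho> (inv x \<otimes> a \<otimes> x)))) * (of_nat m / of_nat (card S) * cnj (mat_trace (\<rho> (inv a \<otimes> c)))))"
        using c lamS N.inv_op_closed1 xc unfolding cmu_def cl_def by (intro sum.cong refl) (auto simp: N.m_inv_closed)
      also have "\<dots> = 0"
        using conv_coef[OF Ssg finS irrmu irrl c Sne] ne by simp
      finally show "(\<Sum>a\<in>S. cmu x a * cl (inv a \<otimes> c)) = 0" .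
    qed
    finally show ?thesis .
  qed
  have Kne: "K \<noteq> {}" using Ks.one_closed by blast
  have cardK: "card K > 0" using finite_subset[OF Ks.subset fin] Kne by (simp add: card_gt_0_iff)
  have inner: "(\<Sum>s\<in>S. cl s * res K theta_lam (x \<otimes> (h \<otimes> s) \<otimes> inv x)) = (if x \<in> K then theta_lam h else 0)"
    if h: "h \<in> K" and x: "x \<in> H" for h x
  proof -
    have xc: "x \<in> carrier G" using x hc by auto
    have hc': "h \<in> carrier G" using h Ks.subset by auto
    define y where "y = x \<otimes> h \<otimes> inv x"
    have yc: "y \<in> carrier G" unfolding y_def using xc hc' by simp
    have eq: "x \<otimes> (h \<otimes> s) \<otimes> inv x = y \<otimes> (x \<otimes> s \<otimes> inv x)" if s: "s \<in> S" for s
      unfolding y_def using xc hc' sc[OF s] by (simp add: m_assoc cancel_l2)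
    have xsS: "\<And>s. s \<in> S \<Longrightarrow> x \<otimes> s \<otimes> inv x \<in> S" using N.inv_op_closed2 xc by auto
    show ?thesis
    proof (cases "y \<in> K")
      case False
      have xK: "x \<notin> K" using False h unfolding y_def by auto
      have "res K theta_lam (x \<otimes> (h \<otimes> s) \<otimes> inv x) = 0" if s: "s \<in> S" for s
      proof -
        have s': "x \<otimes> s \<otimes> inv x \<in> K" using xsS[OF s] SK by auto
        have "y \<otimes> (x \<otimes> s \<otimes> inv x) \<notin> K"
        proof
          assume "y \<otimes> (x \<otimes> s \<otimes> inv x) \<in> K"
          then have "y \<otimes> (x \<otimes> s \<otimes> inv x) \<otimes> inv (x \<otimes> s \<otimes> inv x) \<in> K" using s' by simp
          moreover have "y \<otimes> (x \<otimes> s \<otimes> inv x) \<otimes> inv (x \<otimes> s \<otimes> inv x) = y"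
            using yc s' Ks.subset by (simp add: m_assoc subsetD)
          ultimately show False using False by simp
        qed
        then show ?thesis unfolding res_def using eq[OF s] by simp
      qed
      then show ?thesis using xK by simp
    next
      case True
      have "(\<Sum>s\<in>S. cl s * res K theta_lam (x \<otimes> (h \<otimes> s) \<otimes> inv x))
          = (\<Sum>s\<in>S. cl s * theta_lam (y \<otimes> (x \<otimes> s \<otimes> inv x)))"
      proof (rule sum.cong[OF refl])
        fix s assume s: "s \<in> S"
        have "y \<otimes> (x \<otimes> s \<otimes> inv x) \<in> K" using True xsS[OF s] SK by auto
        then show "cl s * res K theta_lam (x \<otimes> (h \<otimes> s) \<otimes> inv x) = cl s * theta_lam (y \<otimes> (x \<otimes> s \<otimes> inv x))"
          unfolding res_def using eq[OF s] by simp
      qed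
      also have "\<dots> = (\<Sum>s\<in>S. cl (inv x \<otimes> s \<otimes> x) * theta_lam (y \<otimes> (x \<otimes> (inv x \<otimes> s \<otimes> x) \<otimes> inv x)))"
        by (rule sum.reindex_bij_betw[OF normal_conj_bij[OF N xc], symmetric])
      also have "\<dots> = (\<Sum>s\<in>S. cmu x s * mat_trace (\<tau> y * \<tau> s))"
      proof (rule sum.cong[OF refl])
        fix s assume s: "s \<in> S"
        have e: "x \<otimes> (inv x \<otimes> s \<otimes> x) \<otimes> inv x = s" using xc sc[OF s] by (simp add: m_assoc cancel_l1)
        have "y \<otimes> s \<in> K" using True s SK by auto
        then have "theta_lam (y \<otimes> s) = mat_trace (\<tau> y * \<tau> s)" using tlK \<tau>m True s SK by auto
        then show "cl (inv x \<otimes> s \<otimes> x) * theta_lam (y \<otimes> (x \<otimes> (inv x \<otimes> s \<otimes> x) \<otimes> inv x)) = cmu x s * mat_trace (\<tau> y * \<tau> s)"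
          unfolding e cl_def cmu_def by simp
      qed
      also have "\<dots> = mat_trace (\<tau> y * proj S n\<tau> \<tau> (cmu x))"
        using \<tau>c[OF True] \<tau>Sc by (rule trace_mult_proj[symmetric])
      also have "\<dots> = (if x \<in> K then theta_lam h else 0)"
      proof (cases "x \<in> K")
        case xK: True
        have "mat_trace (\<tau> y * proj S n\<tau> \<tau> (cmu x)) = mat_trace (\<tau> y)" using PmuK[OF xK] \<tau>c[OF True] by simp
        also have "\<dots> = mat_trace (\<tau> h)" unfolding y_def by (rule class_fun[OF Ksg rep\<tau> xK h])
        finally show ?thesis using xK tlK h by simp
      next
        case xK: False
        have "mat_trace (\<tau> y * proj S n\<tau> \<tau> (cmu x)) = mat_trace (0\<^sub>m n\<tau> n\<tau>)" using Pmu0[OF x xK] \<tau>c[OF True] by simp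
        then show ?thesis using xK unfolding mat_trace_def by simp
      qed
      finally show ?thesis .
    qed
  qed
  have key: "mat_trace (P * \<sigma> h) = theta_lam h" if h: "h \<in> K" for h
  proof -
    have hE: "h \<in> E" using h KH HE by auto
    have hH: "h \<in> H" using h KH by auto
    have "mat_trace (P * \<sigma> h) = mat_trace (\<sigma> h * P)"
      using Pc \<sigma>c[OF hE] by (rule mat_trace_comm)
    also have "\<dots> = (\<Sum>s\<in>S. cl s * mat_trace (\<sigma> h * \<sigma> s))"
      unfolding P_def using \<sigma>c[OF hE] \<sigma>c SE by (intro trace_mult_proj) auto
    also have "\<dots> = (\<Sum>s\<in>S. cl s * ((\<Sum>x\<in>H. res K theta_lam (x \<otimes> (h \<otimes> s) \<otimes> inv x)) / of_nat (card K)))"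
    proof (rule sum.cong[OF refl])
      fix s assume s: "s \<in> S"
      have hs: "h \<otimes> s \<in> H" using hH s SH by auto
      have "mat_trace (\<sigma> h * \<sigma> s) = \<chi> (h \<otimes> s)" unfolding chiv char_of_def using \<sigma>m hE s SE hs HE by auto
      also have "\<dots> = \<theta> (h \<otimes> s)" using reschi hs unfolding res_def by (metis (mono_tags))
      also have "\<dots> = (\<Sum>x\<in>H. res K theta_lam (x \<otimes> (h \<otimes> s) \<otimes> inv x)) / of_nat (card K)"
        unfolding ind[symmetric] ind_def K_def using hs by simp
      finally show "cl s * mat_trace (\<sigma> h * \<sigma> s) = cl s * ((\<Sum>x\<in>H. res K theta_lam (x \<otimes> (h \<otimes> s) \<otimes> inv x)) / of_nat (card K))" by simp
    qed
    also have "\<dots> = (\<Sum>x\<in>H. \<Sum>s\<in>S. cl s * res K theta_lam (x \<otimes> (h \<otimes> s) \<otimes> inv x)) / of_nat (card K)"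
      by (simp add: sum_divide_distrib sum_distrib_left) (rule sum.swap)
    also have "\<dots> = (\<Sum>x\<in>H. if x \<in> K then theta_lam h else 0) / of_nat (card K)"
      using inner[OF h] by simp
    also have "(\<Sum>x\<in>H. if x \<in> K then theta_lam h else 0) = of_nat (card K) * theta_lam h"
    proof -
      have "(\<Sum>x\<in>H. if x \<in> K then theta_lam h else 0) = sum (\<lambda>x. theta_lam h) (H \<inter> K)"
        by (rule sum.inter_restrict[symmetric, OF finite_subset[OF Hs.subset fin]])
      also have "H \<inter> K = K" using KH by auto
      finally show ?thesis by simp
    qed
    finally show ?thesis using cardK by simp
  qed
  have "res K (char_of T \<rho>') = theta_lam"
  proof
    fix g
    show "res K (char_of T \<rho>') g = theta_lam g"
    proof (cases "g \<in> K")
      case True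
      then show ?thesis using KT key tr' unfolding res_def char_of_def by auto
    next
      case False
      then show ?thesis unfolding res_def tl char_of_def by auto
    qed
  qed
  moreover have "is_character G T (char_of T \<rho>')" unfolding is_character_def using rep' by auto
  ultimately show ?thesis unfolding extends_to_def T_def E_def K_def by auto
qed

end

theorem lemma6p1:
  fixes G :: "('a, 'b) monoid_scheme" and S H :: "'a set"
    and \<theta> lam theta_lam :: "'a \<Rightarrow> complex"
  assumes "group G" and "finite (carrier G)"
    and "subgroup H G" and "S \<lhd> G" and "S \<subseteq> H"
    and "\<theta> \<in> Irr G H" and "lam \<in> Irr G S" and "lies_above S \<theta> lam"
    and "theta_lam \<in> Irr G (stab G H S lam)" and "lies_above S theta_lam lam"
    and "ind G (stab G H S lam) H theta_lam = \<theta>"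
    and "extends_to G (stab G (carrier G) H \<theta>) H \<theta>"
  shows "extends_to G (stab G (carrier G) H \<theta> \<inter> stab G (carrier G) S lam)
           (stab G H S lam) theta_lam"
  by (rule group.main_lemma[OF assms(1,2,3,4,5,6,7,9,10,11,12)])

end
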